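(* Let $\alpha\in\mathbb{R}\setminus\{-1,0\}$, equip $\mathrm{St}(n,k)$ with the $\alpha$-metric, fix $X\in\mathrm{St}(n,k)$, and let $\beta\colon I\to T_X\mathrm{St}(n,k)$ be a curve with associated control curve $u(t)=\big(d_{(I_n,I_k)}(\iota_X\circ\pi)|_{\mathfrak p}\big)^{-1}(\dot\beta(t))\in\mathfrak p$. Let $S\colon I\to O(\mathfrak p)$ and $q=(R,\theta)\colon I\to O(n)\times O(k)$ solve $$\dot S(t)=-\tfrac12\,\mathrm{pr}_{\mathfrak p}\circ\mathrm{ad}_{S(t)u(t)}\circ S(t),\ S(0)=\mathrm{id}_{\mathfrak p},\qquad \dot q(t)=d_{(I_n,I_k)}L_{q(t)}\big(S(t)u(t)\big),\ q(0)=(I_n,I_k).$$ Then $(\beta(t),\widehat\beta(t),B(t))$ is an intrinsic rolling of $T_X\mathrm{St}(n,k)$ over $\mathrm{St}(n,k)$, where $\widehat\beta(t)=(\iota_X\circ\pi)(q(t))=R(t)X\theta(t)^\top$ and $$B(t)=d_{q(t)}(\iota_X\circ\pi)\circ d_{(I_n,I_k)}L_{q(t)}\circ S(t)\circ\big(d_{(I_n,I_k)}(\iota_X\circ\pi)|_{\mathfrak p}\big)^{-1}.$$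
   Context: $\mathrm{St}(n,k)=\{Y\in\mathbb{R}^{n\times k}:Y^\top Y=I_k\}$; $G=O(n)\times O(k)$ acts by $(R,\theta)\cdot Y=RY\theta^\top$, $H$ is the stabilizer of $X$, $\pi\colon G\to G/H$, $\iota_X\colon G/H\to\mathrm{St}(n,k)$, $(R,\theta)H\mapsto RX\theta^\top$; $L_g$ is left translation. On $\mathfrak g=\mathfrak{so}(n)\times\mathfrak{so}(k)$ put $\langle(\Omega_1,\Psi_1),(\Omega_2,\Psi_2)\rangle^\alpha=-\operatorname{tr}(\Omega_1\Omega_2)-\tfrac1\alpha\operatorname{tr}(\Psi_1\Psi_2)$; $\mathfrak h=\{(\Omega,\eta):\Omega X=X\eta\}$, $\mathfrak p=\mathfrak h^\perp$ (nondegenerate for $\alpha\neq-1,0$). The $\alpha$-metric is the $G$-invariant metric on $G/H\cong\mathrm{St}(n,k)$ making $\pi$ a pseudo-Riemannian submersion for the bi-invariant metric defined by $\langle\cdot,\cdot\rangle^\alpha$; on $\mathrm{St}(n,k)$ it reads $\langle V,W\rangle_Y=2\operatorname{tr}(V^\top W)+\tfrac{2\alpha+1}{\alpha+1}\operatorname{tr}(V^\top YY^\top W)$. The projection onto $\mathfrak p$ along $\mathfrak h$ is $\mathrm{pr}_{\mathfrak p}(\Omega,\eta)=\big(XX^\top\Omega+\Omega XX^\top-\tfrac{2\alpha+1}{\alpha+1}XX^\top\Omega XX^\top-\tfrac1{\alpha+1}X\eta X^\top,\ \tfrac{\alpha}{\alpha+1}(\eta-X^\top\Omega X)\big)$; $d_{(I_n,I_k)}(\iota_X\circ\pi)|_{\mathfrak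 p}\colon(\Omega,\eta)\mapsto\Omega X-X\eta$ is a linear isometry $\mathfrak p\to T_X\mathrm{St}(n,k)$ with inverse $V\mapsto\big(VX^\top-XV^\top+\tfrac{2\alpha+1}{\alpha+1}XV^\top XX^\top,\ -\tfrac{\alpha}{\alpha+1}X^\top V\big)$. $O(\mathfrak p)$ is the isometry group of $(\mathfrak p,\langle\cdot,\cdot\rangle^\alpha)$. An intrinsic rolling of $T_X\mathrm{St}(n,k)$ (with scalar product $\langle\cdot,\cdot\rangle_X$) over $\mathrm{St}(n,k)$ is a triple of a curve $\beta$ in $T_X\mathrm{St}(n,k)$, a curve $\widehat\beta$ in $\mathrm{St}(n,k)$ and linear isometries $B(t)\colon T_X\mathrm{St}(n,k)\to T_{\widehat\beta(t)}\mathrm{St}(n,k)$ such that $\dot{\widehat\beta}(t)=B(t)\dot\beta(t)$ and $B(t)Z(t)$ is parallel (Levi-Civita of the $\alpha$-metric) along $\widehat\beta$ iff $Z(t)$ is parallel along $\beta$, i.e. constant. *)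

theory Defs
  imports "HOL-Analysis.Analysis"
begin

(* n x k real matrices are  real^'k^'n  (rows indexed by 'n); n = CARD('n), k = CARD('k). *)

definition stiefel :: "(real^'k^'n) set" where
  "stiefel = {Y. transpose Y ** Y = mat 1}"

definition tangent_st :: "real^'k^'n \<Rightarrow> (real^'k^'n) set" where
  "tangent_st Y = {V. transpose Y ** V + transpose V ** Y = 0}"

definition alpha_metric :: "real \<Rightarrow> real^'k^'n \<Rightarrow> real^'k^'n \<Rightarrow> real^'k^'n \<Rightarrow> real" where
  "alpha_metric a Y V W =
     2 * trace (transpose V ** W) - (2*a+1)/(a+1) * trace (transpose V ** Y ** transpose Y ** W)"

definition metric_deriv :: "real \<Rightarrow> real^'k^'n \<Rightarrow> real^'k^'n \<Rightarrow> real^'k^'n \<Rightarrow> real^'k^'n \<Rightarrow> real" where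
  "metric_deriv a Y U V W = frechet_derivative (\<lambda>Z. alpha_metric a Z V W) (at Y) U"

(* W is a Levi-Civita parallel vector field along the curve \<gamma> in St(n,k) on I
   (covariant derivative along \<gamma> given by the Koszul formula for the induced metric) *)
definition parallel_along ::
  "real \<Rightarrow> (real \<Rightarrow> real^'k^'n) \<Rightarrow> (real \<Rightarrow> real^'k^'n) \<Rightarrow> real set \<Rightarrow> bool" where
  "parallel_along a \<gamma> W I \<longleftrightarrow>
     (\<exists>\<gamma>' W'. (\<forall>t\<in>I. (\<gamma> has_vector_derivative \<gamma>' t) (at t within I)
                     \<and> (W has_vector_derivative W' t) (at t within I))
       \<and> (\<forall>t\<in>I. W t \<in> tangent_st (\<gamma> t) \<and>
              (\<forall>U\<in>tangent_st (\<gamma> t).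
                 alpha_metric a (\<gamma> t) (W' t) U
                 + 1/2 * (metric_deriv a (\<gamma> t) (\<gamma>' t) (W t) U
                          + metric_deriv a (\<gamma> t) (W t) (\<gamma>' t) U
                          - metric_deriv a (\<gamma> t) U (\<gamma>' t) (W t)) = 0)))"

definition lin_isometry_st :: "real \<Rightarrow> real^'k^'n \<Rightarrow> real^'k^'n \<Rightarrow> (real^'k^'n \<Rightarrow> real^'k^'n) \<Rightarrow> bool" where
  "lin_isometry_st a X Y L \<longleftrightarrow>
     (\<forall>V\<in>tangent_st X. \<forall>W\<in>tangent_st X. \<forall>c d. L (c *\<^sub>R V + d *\<^sub>R W) = c *\<^sub>R L V + d *\<^sub>R L W)
     \<and> bij_betw L (tangent_st X) (tangent_st Y)
     \<and> (\<forall>V\<in>tangent_st X. \<forall>W\<in>tangent_st X. alpha_metric a Y (L V) (L W) = alpha_metric a X V W)"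

definition intrinsic_rolling ::
  "real \<Rightarrow> real^'k^'n \<Rightarrow> real set \<Rightarrow> (real \<Rightarrow> real^'k^'n) \<Rightarrow> (real \<Rightarrow> real^'k^'n)
    \<Rightarrow> (real \<Rightarrow> real^'k^'n \<Rightarrow> real^'k^'n) \<Rightarrow> bool" where
  "intrinsic_rolling a X I \<beta> \<beta>h B \<longleftrightarrow>
     (\<forall>t\<in>I. \<beta> t \<in> tangent_st X \<and> \<beta>h t \<in> stiefel \<and> lin_isometry_st a X (\<beta>h t) (B t))
     \<and> (\<forall>t\<in>I. \<exists>v. (\<beta> has_vector_derivative v) (at t within I)
                  \<and> (\<beta>h has_vector_derivative B t v) (at t within I))
     \<and> (\<forall>Z. (\<forall>t\<in>I. Z t \<in> tangent_st X \<and> Z differentiable (at t within I)) \<longrightarrow>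
            (parallel_along a \<beta>h (\<lambda>t. B t (Z t)) I
               \<longleftrightarrow> (\<forall>t\<in>I. (Z has_vector_derivative 0) (at t within I))))"

definition gla :: "((real^'n^'n) \<times> (real^'k^'k)) set" where
  "gla = {p. transpose (fst p) = - fst p \<and> transpose (snd p) = - snd p}"

definition ip_alpha :: "real \<Rightarrow> (real^'n^'n) \<times> (real^'k^'k) \<Rightarrow> (real^'n^'n) \<times> (real^'k^'k) \<Rightarrow> real" where
  "ip_alpha a p q = - trace (fst p ** fst q) - 1/a * trace (snd p ** snd q)"

definition hla :: "real^'k^'n \<Rightarrow> ((real^'n^'n) \<times> (real^'k^'k)) set" where
  "hla X = {p \<in> gla. fst p ** X = X ** snd p}"

definition pla :: "real \<Rightarrow> real^'k^'n \<Rightarrow> ((real^'n^'n) \<times> (real^'k^'k)) set" where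
  "pla a X = {p \<in> gla. \<forall>h\<in>hla X. ip_alpha a p h = 0}"

definition pr_p :: "real \<Rightarrow> real^'k^'n \<Rightarrow> (real^'n^'n) \<times> (real^'k^'k) \<Rightarrow> (real^'n^'n) \<times> (real^'k^'k)" where
  "pr_p a X \<xi> = (THE p. p \<in> pla a X \<and> \<xi> - p \<in> hla X)"

definition lie_bracket :: "(real^'n^'n) \<times> (real^'k^'k) \<Rightarrow> (real^'n^'n) \<times> (real^'k^'k) \<Rightarrow> (real^'n^'n) \<times> (real^'k^'k)" where
  "lie_bracket p q = (fst p ** fst q - fst q ** fst p, snd p ** snd q - snd q ** snd p)"

definition O_p :: "real \<Rightarrow> real^'k^'n \<Rightarrow> ((real^'n^'n) \<times> (real^'k^'k) \<Rightarrow> (real^'n^'n) \<times> (real^'k^'k)) set" where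
  "O_p a X = {T. (\<forall>\<xi>\<in>pla a X. \<forall>\<eta>\<in>pla a X. \<forall>c d. T (c *\<^sub>R \<xi> + d *\<^sub>R \<eta>) = c *\<^sub>R T \<xi> + d *\<^sub>R T \<eta>)
               \<and> bij_betw T (pla a X) (pla a X)
               \<and> (\<forall>\<xi>\<in>pla a X. \<forall>\<eta>\<in>pla a X. ip_alpha a (T \<xi>) (T \<eta>) = ip_alpha a \<xi> \<eta>)}"

definition iota_pi :: "real^'k^'n \<Rightarrow> (real^'n^'n) \<times> (real^'k^'k) \<Rightarrow> real^'k^'n" where
  "iota_pi X g = fst g ** X ** transpose (snd g)"

definition d_iota_pi :: "real^'k^'n \<Rightarrow> (real^'n^'n) \<times> (real^'k^'k) \<Rightarrow> real^'k^'n" where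
  "d_iota_pi X \<xi> = fst \<xi> ** X - X ** snd \<xi>"

definition d_iota_pi_inv :: "real \<Rightarrow> real^'k^'n \<Rightarrow> real^'k^'n \<Rightarrow> (real^'n^'n) \<times> (real^'k^'k)" where
  "d_iota_pi_inv a X V = (THE \<xi>. \<xi> \<in> pla a X \<and> d_iota_pi X \<xi> = V)"

definition dL :: "(real^'n^'n) \<times> (real^'k^'k) \<Rightarrow> (real^'n^'n) \<times> (real^'k^'k) \<Rightarrow> (real^'n^'n) \<times> (real^'k^'k)" where
  "dL g \<xi> = (fst g ** fst \<xi>, snd g ** snd \<xi>)"

definition d_iota_pi_at :: "real^'k^'n \<Rightarrow> (real^'n^'n) \<times> (real^'k^'k) \<Rightarrow> (real^'n^'n) \<times> (real^'k^'k) \<Rightarrow> real^'k^'n" where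
  "d_iota_pi_at X g v = fst v ** X ** transpose (snd g) + fst g ** X ** transpose (snd v)"

end

theory Submission
  imports Defs
begin

lemma mm_add_r: "(A + B) ** C = A ** C + B ** (C::real^'a^'b)"
  by (vector matrix_matrix_mult_def sum.distrib[symmetric] field_simps)
lemma mm_diff_l: "A ** (B - C) = A ** B - A ** (C::real^'a^'b)"
  by (vector matrix_matrix_mult_def sum_subtractf[symmetric] field_simps)
lemma mm_diff_r: "(A - B) ** C = A ** C - B ** (C::real^'a^'b)"
  by (vector matrix_matrix_mult_def sum_subtractf[symmetric] field_simps)
lemma mm_neg_l: "(- A) ** B = - (A ** (B::real^'a^'b))"
  by (vector matrix_matrix_mult_def sum_negf[symmetric])
lemma mm_neg_r: "A ** (- B) = - (A ** (B::real^'a^'b))"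
  by (vector matrix_matrix_mult_def sum_negf[symmetric])
lemma mm_scale_l: "(c *\<^sub>R A) ** B = c *\<^sub>R (A ** (B::real^'a^'b))"
  by (simp add: scalar_matrix_assoc)
lemma mm_scale_r: "A ** (c *\<^sub>R B) = c *\<^sub>R (A ** (B::real^'a^'b))"
  by (simp add: matrix_scalar_ac scalar_matrix_assoc)
lemma mm_zero_l: "(0::real^'a^'b) ** B = 0" by simp
lemma mm_zero_r: "A ** (0::real^'a^'b) = 0" by simp
lemma tr_add: "transpose (A + B) = transpose A + transpose (B::real^'a^'b)"
  by (vector transpose_def)
lemma tr_diff: "transpose (A - B) = transpose A - transpose (B::real^'a^'b)"
  by (vector transpose_def)
lemma tr_neg: "transpose (- A) = - transpose (A::real^'a^'b)"
  by (vector transpose_def)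
lemma tr_zero: "transpose (0::real^'a^'b) = 0"
  by (vector transpose_def)

lemmas mnorm = matrix_add_ldistrib mm_add_r mm_diff_l mm_diff_r mm_neg_l mm_neg_r mm_scale_l mm_scale_r
  matrix_mul_assoc[symmetric] tr_add tr_diff tr_neg transpose_scalar matrix_transpose_mul transpose_transpose
  mm_zero_l mm_zero_r tr_zero

lemma trace_scale: "trace (c *\<^sub>R (A::real^'n^'n)) = c * trace A"
  by (simp add: trace_def sum_distrib_left)
lemma trace_neg: "trace (- (A::real^'n^'n)) = - trace A"
  by (simp add: trace_def sum_negf)
lemma trace_transp: "trace (transpose (A::real^'n^'n)) = trace A"
  by (simp add: trace_def transpose_def)
lemma trace_zero: "trace (0::real^'n^'n) = 0"
  by (simp add: trace_def)
lemmas tnorm = trace_add trace_sub trace_scale trace_neg trace_zero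


lemma trace_sq: "trace (transpose A ** (A::real^'k^'n)) = (\<Sum>i\<in>UNIV. \<Sum>j\<in>UNIV. (A$j$i)^2)"
  by (simp add: trace_def matrix_matrix_mult_def transpose_def power2_eq_square)

lemma trace_sq_nonneg: "trace (transpose A ** (A::real^'k^'n)) \<ge> 0"
  unfolding trace_sq by (intro sum_nonneg) auto

lemma trace_sq_zero: "trace (transpose A ** (A::real^'k^'n)) = 0 \<Longrightarrow> A = 0"
proof -
  assume h: "trace (transpose A ** A) = 0"
  have "\<forall>i\<in>UNIV. (\<Sum>j\<in>UNIV. (A$j$i)^2) = 0"
    using h unfolding trace_sq by (subst sum_nonneg_eq_0_iff[symmetric]) (auto intro: sum_nonneg)
  then have "\<forall>i j. (A$j$i)^2 = 0"
    by (subst (asm) sum_nonneg_eq_0_iff) auto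
  then show "A = 0" by (simp add: vec_eq_iff)
qed


lemma trace_sym_skew: "transpose S = S \<Longrightarrow> transpose M = - M \<Longrightarrow> trace (S ** (M::real^'n^'n)) = 0"
proof -
  assume s: "transpose S = S" and m: "transpose M = - M"
  have "trace (S ** M) = trace (transpose (S ** M))" by (simp add: trace_transp)
  also have "\<dots> = trace (transpose M ** transpose S)" by (simp add: matrix_transpose_mul)
  also have "\<dots> = - trace (M ** S)" using s m by (simp add: mm_neg_l trace_neg)
  also have "\<dots> = - trace (S ** M)" by (subst trace_mul_sym) (rule refl)
  finally show ?thesis by simp
qed

lemma bilinear_mm: "bilinear ((**) :: real^'a^'b \<Rightarrow> real^'c^'a \<Rightarrow> real^'c^'b)"
  unfolding bilinear_def linear_iff by (simp add: matrix_add_ldistrib mm_add_r mm_scale_l mm_scale_r)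

lemma bb_mm: "bounded_bilinear ((**) :: real^'a^'b \<Rightarrow> real^'c^'a \<Rightarrow> real^'c^'b)"
  using bilinear_mm bilinear_conv_bounded_bilinear by blast

lemma bl_transpose: "bounded_linear (transpose :: real^'a^'b \<Rightarrow> real^'b^'a)"
  unfolding linear_conv_bounded_linear[symmetric] linear_iff by (simp add: tr_add transpose_scalar)

lemma bl_trace: "bounded_linear (trace :: real^'a^'a \<Rightarrow> real)"
  unfolding linear_conv_bounded_linear[symmetric] linear_iff by (simp add: trace_add trace_scale)


lemma deriv_bot: "at t within I = bot \<Longrightarrow> (f has_vector_derivative v) (at t within I)"
  by (simp add: has_vector_derivative_def has_derivative_def bounded_linear_scaleR_left)

definition mm :: "real \<Rightarrow> real" where "mm a = 1 / (a + 1)"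

definition Einv :: "real \<Rightarrow> real^'k^'n \<Rightarrow> real^'k^'n \<Rightarrow> (real^'n^'n) \<times> (real^'k^'k)" where
  "Einv a X V = (V ** transpose X - X ** transpose V + (2 - mm a) *\<^sub>R (X ** transpose V ** X ** transpose X),
                 (mm a - 1) *\<^sub>R (transpose X ** V))"

lemma c_eq: "a \<noteq> -1 \<Longrightarrow> (2*a+1)/(a+1) = 2 - mm a"
  unfolding mm_def by (simp add: field_simps)

lemma iso_aux:
  fixes X K1 K2 :: "real^'k^'n" and O1 O2 :: "real^'k^'k"
  assumes XX: "transpose X ** X = mat 1" and XK1: "transpose X ** K1 = 0" and XK2: "transpose X ** K2 = 0"
    and O1: "transpose O1 = - O1" and O2: "transpose O2 = - O2" and a: "a \<noteq> -1" "a \<noteq> 0"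
  shows "ip_alpha a (Einv a X (X ** O1 + K1)) (Einv a X (X ** O2 + K2))
       = alpha_metric a X (X ** O1 + K1) (X ** O2 + K2)"
proof -
  have XX2: "transpose X ** (X ** M) = M" for M :: "real^'c^'k"
    by (simp add: matrix_mul_assoc XX)
  have XK12: "transpose X ** (K1 ** M) = 0" for M :: "real^'c^'k"
    by (simp add: matrix_mul_assoc XK1)
  have XK22: "transpose X ** (K2 ** M) = 0" for M :: "real^'c^'k"
    by (simp add: matrix_mul_assoc XK2)
  have KX1: "transpose K1 ** X = 0" using XK1
    by (metis matrix_transpose_mul transpose_transpose tr_zero)
  have KX2: "transpose K2 ** X = 0" using XK2
    by (metis matrix_transpose_mul transpose_transpose tr_zero)
  have KX12: "transpose K1 ** (X ** M) = 0" for M :: "real^'c^'k"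
    by (simp add: matrix_mul_assoc KX1)
  have KX22: "transpose K2 ** (X ** M) = 0" for M :: "real^'c^'k"
    by (simp add: matrix_mul_assoc KX2)
  have rotX: "trace (X ** M) = trace (M ** X)" for M
    by (rule trace_mul_sym)
  have rotK1: "trace (K1 ** M) = trace (M ** K1)" for M
    by (rule trace_mul_sym)
  have rotK2: "trace (K2 ** M) = trace (M ** K2)" for M
    by (rule trace_mul_sym)
  have t1: "trace (O2 ** O1) = trace (O1 ** O2)" by (rule trace_mul_sym)
  have t2: "trace (transpose K2 ** K1) = trace (transpose K1 ** K2)"
    by (metis trace_transp matrix_transpose_mul transpose_transpose)
  have t3: "trace (K1 ** transpose K2) = trace (transpose K1 ** K2)"
    by (metis trace_mul_sym t2)
  have t4: "trace (K2 ** transpose K1) = trace (transpose K1 ** K2)"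
    by (metis trace_mul_sym)
  have ma: "mm a * (a + 1) = 1" using a unfolding mm_def by (simp add: field_simps)
  have m1: "mm a - 1 = - a * mm a" using ma by (simp add: algebra_simps)
  show ?thesis
    unfolding ip_alpha_def alpha_metric_def Einv_def fst_conv snd_conv
    apply (simp only: mnorm XX XX2 XK1 XK12 XK2 XK22 KX1 KX12 KX2 KX22 O1 O2 matrix_mul_lid matrix_mul_rid
       tnorm)
    apply (simp only: rotX rotK1 rotK2 mnorm XX XX2 XK1 XK12 XK2 XK22 KX1 KX12 KX2 KX22 matrix_mul_lid matrix_mul_rid)
    apply (simp only: trace_zero t2 t1 t3 t4)
    apply (simp only: c_eq[OF a(1)] m1)
    using a(2) apply (simp add: field_simps)
    using ma apply algebra
    done
qed


lemma tangent_iff: "V \<in> tangent_st X \<longleftrightarrow> transpose V ** X = - (transpose X ** V)"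
  unfolding tangent_st_def by (simp add: eq_neg_iff_add_eq_0 add.commute)

lemma stiefel_iff: "X \<in> stiefel \<longleftrightarrow> transpose X ** X = mat 1"
  unfolding stiefel_def by simp

lemma decomp:
  fixes X V :: "real^'k^'n"
  assumes X: "transpose X ** X = mat 1" and V: "V \<in> tangent_st X"
  shows "\<exists>Om Kp. V = X ** Om + Kp \<and> transpose X ** Kp = 0 \<and> transpose Om = - Om"
proof (intro exI conjI)
  show "V = X ** (transpose X ** V) + (V - X ** (transpose X ** V))" by simp
  show "transpose X ** (V - X ** (transpose X ** V)) = 0"
    by (simp add: mm_diff_l matrix_mul_assoc X)
  show "transpose (transpose X ** V) = - (transpose X ** V)"
    using V by (simp add: tangent_iff matrix_transpose_mul)
qed

lemma iso_Einv:
  fixes X V W :: "real^'k^'n"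
  assumes X: "transpose X ** X = mat 1" and V: "V \<in> tangent_st X" and W: "W \<in> tangent_st X"
    and a: "a \<noteq> -1" "a \<noteq> 0"
  shows "ip_alpha a (Einv a X V) (Einv a X W) = alpha_metric a X V W"
proof -
  obtain O1 K1 where 1: "V = X ** O1 + K1" "transpose X ** K1 = 0" "transpose O1 = - O1"
    using decomp[OF X V] by blast
  obtain O2 K2 where 2: "W = X ** O2 + K2" "transpose X ** K2 = 0" "transpose O2 = - O2"
    using decomp[OF X W] by blast
  show ?thesis using iso_aux[OF X 1(2) 2(2) 1(3) 2(3) a] 1(1) 2(1) by simp
qed

lemma Einv_gla_dd:
  fixes X V :: "real^'k^'n"
  assumes X: "transpose X ** X = mat 1" and V: "V \<in> tangent_st X"
  shows "Einv a X V \<in> gla" "d_iota_pi X (Einv a X V) = V"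
proof -
  obtain Om Kp where 1: "V = X ** Om + Kp" "transpose X ** Kp = 0" "transpose Om = - Om"
    using decomp[OF X V] by blast
  have XX2: "transpose X ** (X ** M) = M" for M :: "real^'c^'k"
    by (simp add: matrix_mul_assoc X)
  have XK2: "transpose X ** (Kp ** M) = 0" for M :: "real^'c^'k"
    by (simp add: matrix_mul_assoc 1(2))
  have KX: "transpose Kp ** X = 0" using 1(2)
    by (metis matrix_transpose_mul transpose_transpose tr_zero)
  have KX2: "transpose Kp ** (X ** M) = 0" for M :: "real^'c^'k"
    by (simp add: matrix_mul_assoc KX)
  show "Einv a X V \<in> gla"
    unfolding gla_def Einv_def 1(1)
    by (simp only: mem_Collect_eq fst_conv snd_conv mnorm X XX2 1(2) XK2 KX KX2 1(3) matrix_mul_lid matrix_mul_rid)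
     (simp add: algebra_simps)
  show "d_iota_pi X (Einv a X V) = V"
    unfolding d_iota_pi_def Einv_def 1(1)
    by (simp only: mem_Collect_eq fst_conv snd_conv mnorm X XX2 1(2) XK2 KX KX2 1(3) matrix_mul_lid matrix_mul_rid)
     (simp add: vec_eq_iff algebra_simps)
qed

lemma Einv_orth:
  fixes X V :: "real^'k^'n"
  assumes X: "transpose X ** X = mat 1" and V: "V \<in> tangent_st X" and h: "h \<in> hla X"
    and a: "a \<noteq> -1" "a \<noteq> 0"
  shows "ip_alpha a (Einv a X V) h = 0"
proof -
  obtain Om Kp where 1: "V = X ** Om + Kp" "transpose X ** Kp = 0" "transpose Om = - Om"
    using decomp[OF X V] by blast
  obtain Oh eh where hh: "h = (Oh, eh)" by (cases h)
  have hO: "transpose Oh = - Oh" "transpose eh = - eh" "Oh ** X = X ** eh"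
    using h unfolding hh hla_def gla_def by auto
  have XO: "transpose X ** Oh = eh ** transpose X"
  proof -
    have "transpose (Oh ** X) = transpose (X ** eh)" using hO(3) by simp
    then show ?thesis using hO(1,2) by (simp add: matrix_transpose_mul mm_neg_l mm_neg_r)
  qed
  have XO2: "transpose X ** (Oh ** M) = eh ** (transpose X ** M)" for M :: "real^'c^'n"
    by (simp add: matrix_mul_assoc XO)
  have OX2: "Oh ** (X ** M) = X ** (eh ** M)" for M :: "real^'c^'k"
    by (simp add: matrix_mul_assoc hO(3))
  have XX2: "transpose X ** (X ** M) = M" for M :: "real^'c^'k"
    by (simp add: matrix_mul_assoc X)
  have XK2: "transpose X ** (Kp ** M) = 0" for M :: "real^'c^'k"
    by (simp add: matrix_mul_assoc 1(2))
  have KX: "transpose Kp ** X = 0" using 1(2)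
    by (metis matrix_transpose_mul transpose_transpose tr_zero)
  have KX2: "transpose Kp ** (X ** M) = 0" for M :: "real^'c^'k"
    by (simp add: matrix_mul_assoc KX)
  have rotX: "trace (X ** M) = trace (M ** X)" for M
    by (rule trace_mul_sym)
  have rotK: "trace (Kp ** M) = trace (M ** Kp)" for M
    by (rule trace_mul_sym)
  have ma: "mm a * (a + 1) = 1" using a unfolding mm_def by (simp add: field_simps)
  have m1: "mm a - 1 = - a * mm a" using ma by (simp add: algebra_simps)
  show ?thesis
    unfolding ip_alpha_def Einv_def fst_conv snd_conv hh 1(1)
    apply (simp only: mnorm X XX2 1(2) XK2 KX KX2 1(3) matrix_mul_lid matrix_mul_rid XO XO2 hO(3) OX2 tnorm)
    apply (simp only: rotX rotK)
    apply (simp only: mnorm X XX2 1(2) XK2 KX KX2 1(3) matrix_mul_lid matrix_mul_rid XO XO2 hO(3) OX2 tnorm m1)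
    using a(2) apply (simp add: field_simps)
    done
qed


lemma Einv_pla:
  fixes X V :: "real^'k^'n"
  assumes X: "transpose X ** X = mat 1" and V: "V \<in> tangent_st X" and a: "a \<noteq> -1" "a \<noteq> 0"
  shows "Einv a X V \<in> pla a X"
  unfolding pla_def using Einv_gla_dd(1)[OF X V] Einv_orth[OF X V _ a] by auto

lemma trace_skew_sq: "transpose M = - M \<Longrightarrow> trace (M ** M) = 0 \<Longrightarrow> M = (0::real^'n^'n)"
  by (metis trace_sq_zero mm_neg_l trace_neg neg_equal_0_iff_equal)

lemma pla_char:
  fixes X :: "real^'k^'n"
  assumes X: "transpose X ** X = mat 1" and xi: "xi \<in> pla a X" and a: "a \<noteq> 0"
  shows "snd xi = - a *\<^sub>R (transpose X ** fst xi ** X)"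
    "(mat 1 - X ** transpose X) ** fst xi ** (mat 1 - X ** transpose X) = 0"
proof -
  obtain Om et where xx: "xi = (Om, et)" by (cases xi)
  have sk: "transpose Om = - Om" "transpose et = - et"
    using xi unfolding xx pla_def gla_def by auto
  have orth: "\<And>h. h \<in> hla X \<Longrightarrow> ip_alpha a (Om, et) h = 0"
    using xi unfolding xx pla_def by auto
  have XX2: "transpose X ** (X ** N) = N" for N :: "real^'c^'k"
    by (simp add: matrix_mul_assoc X)
  define M where "M = et + a *\<^sub>R (transpose X ** Om ** X)"
  have Msk: "transpose M = - M"
    unfolding M_def by (simp add: mnorm sk algebra_simps)
  have h1: "(X ** M ** transpose X, M) \<in> hla X"
    unfolding hla_def gla_def
    by (simp add: mnorm Msk XX2 X)
  have "ip_alpha a (Om, et) (X ** M ** transpose X, M) = 0" using orth[OF h1] .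
  then have e1: "trace (Om ** (X ** M ** transpose X)) + 1/a * trace (et ** M) = 0"
    unfolding ip_alpha_def by simp
  have "trace (Om ** (X ** M ** transpose X)) = trace (transpose X ** Om ** X ** M)"
    by (metis matrix_mul_assoc trace_mul_sym)
  with e1 have "trace (transpose X ** Om ** X ** M) + 1/a * trace (et ** M) = 0" by simp
  then have "a * trace (transpose X ** Om ** X ** M) + trace (et ** M) = 0"
    using a by (simp add: field_simps)
  then have "trace (M ** M) = 0"
    unfolding M_def by (simp add: mm_add_r mm_scale_l trace_add trace_scale algebra_simps)
  then have "M = 0" using trace_skew_sq Msk by blast
  then show "snd xi = - a *\<^sub>R (transpose X ** fst xi ** X)"
    unfolding xx M_def by (simp add: eq_neg_iff_add_eq_0)
  define P where "P = mat 1 - X ** transpose (X::real^'k^'n)"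
  have PP: "P ** P = P" unfolding P_def
    by (simp add: mnorm X XX2)
  have Pt: "transpose P = P" unfolding P_def by (simp add: mnorm)
  define C where "C = P ** Om ** P"
  have Csk: "transpose C = - C" unfolding C_def by (simp add: mnorm Pt sk)
  have PX: "P ** X = 0" unfolding P_def by (simp add: mnorm X)
  have h2: "(C, 0) \<in> hla X"
    unfolding hla_def gla_def using Csk by (simp add: C_def mnorm PX)
  have "ip_alpha a (Om, et) (C, 0) = 0" using orth[OF h2] .
  then have e2: "trace (Om ** C) = 0" unfolding ip_alpha_def by (simp add: trace_zero)
  have "trace (C ** C) = trace (P ** (Om ** P ** Om ** P))"
    unfolding C_def by (metis PP matrix_mul_assoc)
  also have "\<dots> = trace ((Om ** P ** Om ** P) ** P)" by (rule trace_mul_sym)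
  also have "\<dots> = trace (Om ** C)" unfolding C_def by (metis PP matrix_mul_assoc)
  finally have "trace (C ** C) = 0" using e2 by simp
  then have "C = 0" using trace_skew_sq Csk by blast
  then show "(mat 1 - X ** transpose X) ** fst xi ** (mat 1 - X ** transpose X) = 0"
    unfolding xx C_def P_def by simp
qed


lemma Einv_dd:
  fixes X :: "real^'k^'n"
  assumes X: "transpose X ** X = mat 1" and xi: "xi \<in> pla a X" and a: "a \<noteq> -1" "a \<noteq> 0"
  shows "Einv a X (d_iota_pi X xi) = xi"
proof -
  obtain Om et where xx: "xi = (Om, et)" by (cases xi)
  have sk: "transpose Om = - Om"
    using xi unfolding xx pla_def gla_def by auto
  have et: "et = - a *\<^sub>R (transpose X ** Om ** X)" using pla_char(1)[OF X xi a(2)] xx by simp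
  have PP: "(mat 1 - X ** transpose X) ** Om ** (mat 1 - X ** transpose X) = 0"
    using pla_char(2)[OF X xi a(2)] xx by simp
  have XX2: "transpose X ** (X ** N) = N" for N :: "real^'c^'k"
    by (simp add: matrix_mul_assoc X)
  have rel: "Om = X ** (transpose X ** Om) + Om ** (X ** transpose X) - X ** (transpose X ** (Om ** (X ** transpose X)))"
  proof -
    have "(mat 1 - X ** transpose X) ** Om ** (mat 1 - X ** transpose X)
      = Om - X ** (transpose X ** Om) - Om ** (X ** transpose X) + X ** (transpose X ** (Om ** (X ** transpose X)))"
      by (simp add: mnorm algebra_simps)
    with PP show ?thesis by (simp add: algebra_simps)
  qed
  have ma: "mm a * (a + 1) = 1" using a unfolding mm_def by (simp add: field_simps)
  have m1: "mm a - 1 = - a * mm a" using ma by (simp add: algebra_simps)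
  have f: "fst (Einv a X (d_iota_pi X xi)) = X ** (transpose X ** Om) + Om ** (X ** transpose X) - X ** (transpose X ** (Om ** (X ** transpose X)))"
    unfolding Einv_def d_iota_pi_def xx fst_conv snd_conv et
    apply (simp only: mnorm X XX2 sk matrix_mul_lid matrix_mul_rid)
    apply (simp add: vec_eq_iff)
    apply (intro allI)
    using ma apply algebra
    done
  have s: "snd (Einv a X (d_iota_pi X xi)) = et"
    unfolding Einv_def d_iota_pi_def xx fst_conv snd_conv et
    apply (simp only: mnorm X XX2 sk matrix_mul_lid matrix_mul_rid)
    apply (simp add: vec_eq_iff)
    apply (intro allI)
    using ma apply algebra
    done
  show ?thesis using f s rel xx by (metis prod.collapse fst_conv snd_conv)
qed


lemma dd_tangent:
  fixes X :: "real^'k^'n"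
  assumes X: "transpose X ** X = mat 1" and xi: "xi \<in> gla" shows "d_iota_pi X xi \<in> tangent_st X"
proof -
  have sk: "transpose (fst xi) = - fst xi" "transpose (snd xi) = - snd xi" using xi unfolding gla_def by auto
  have XX2: "transpose X ** (X ** N) = N" for N :: "real^'c^'k"
    by (simp add: matrix_mul_assoc X)
  show ?thesis unfolding tangent_st_def d_iota_pi_def
    by (simp add: mnorm sk X XX2)
qed

lemma inv_eq:
  fixes X V :: "real^'k^'n"
  assumes X: "transpose X ** X = mat 1" and V: "V \<in> tangent_st X" and a: "a \<noteq> -1" "a \<noteq> 0"
  shows "d_iota_pi_inv a X V = Einv a X V"
  unfolding d_iota_pi_inv_def
proof (rule the_equality)
  show "Einv a X V \<in> pla a X \<and> d_iota_pi X (Einv a X V) = V"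
    using Einv_pla[OF X V a] Einv_gla_dd(2)[OF X V] by blast
  show "xi = Einv a X V" if "xi \<in> pla a X \<and> d_iota_pi X xi = V" for xi
    using Einv_dd[OF X _ a, of xi] that by auto
qed

lemma gla_diff: "x \<in> gla \<Longrightarrow> y \<in> gla \<Longrightarrow> x - y \<in> gla"
  unfolding gla_def by (auto simp: tr_diff)
lemma gla_add: "x \<in> gla \<Longrightarrow> y \<in> gla \<Longrightarrow> x + y \<in> gla"
  unfolding gla_def by (auto simp: tr_add)
lemma gla_scale: "x \<in> gla \<Longrightarrow> c *\<^sub>R x \<in> gla"
  unfolding gla_def by (auto simp: transpose_scalar)
lemma gla_zero: "0 \<in> gla"
  unfolding gla_def by (auto simp: tr_zero)
lemma pla_gla: "x \<in> pla a X \<Longrightarrow> x \<in> gla"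
  unfolding pla_def by auto

lemma dd_add: "d_iota_pi X (x + y) = d_iota_pi X x + d_iota_pi X y"
  unfolding d_iota_pi_def by (simp add: mnorm algebra_simps)
lemma dd_diff: "d_iota_pi X (x - y) = d_iota_pi X x - d_iota_pi X y"
  unfolding d_iota_pi_def by (simp add: mnorm algebra_simps)
lemma dd_scale: "d_iota_pi X (c *\<^sub>R x) = c *\<^sub>R d_iota_pi X x"
  unfolding d_iota_pi_def by (simp add: mnorm algebra_simps)

lemma pr_eq:
  fixes X :: "real^'k^'n"
  assumes X: "transpose X ** X = mat 1" and xi: "xi \<in> gla" and a: "a \<noteq> -1" "a \<noteq> 0"
  shows "pr_p a X xi = Einv a X (d_iota_pi X xi)"
  unfolding pr_p_def
proof (rule the_equality)
  have T: "d_iota_pi X xi \<in> tangent_st X" using dd_tangent[OF X xi] .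
  have P: "Einv a X (d_iota_pi X xi) \<in> pla a X" using Einv_pla[OF X T a] .
  have D: "d_iota_pi X (Einv a X (d_iota_pi X xi)) = d_iota_pi X xi" using Einv_gla_dd(2)[OF X T] .
  have "xi - Einv a X (d_iota_pi X xi) \<in> hla X"
  proof -
    have g: "xi - Einv a X (d_iota_pi X xi) \<in> gla" using gla_diff[OF xi pla_gla[OF P]] .
    have "d_iota_pi X (xi - Einv a X (d_iota_pi X xi)) = 0" using D by (simp add: dd_diff)
    then show ?thesis using g unfolding hla_def d_iota_pi_def by simp
  qed
  then show "Einv a X (d_iota_pi X xi) \<in> pla a X \<and> xi - Einv a X (d_iota_pi X xi) \<in> hla X" using P by blast
  show "p = Einv a X (d_iota_pi X xi)" if "p \<in> pla a X \<and> xi - p \<in> hla X" for p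
  proof -
    have "d_iota_pi X (xi - p) = 0" using that unfolding hla_def d_iota_pi_def by simp
    then have "d_iota_pi X p = d_iota_pi X xi" by (simp add: dd_diff)
    then show ?thesis using Einv_dd[OF X _ a, of p] that by auto
  qed
qed

lemma d_at_dL:
  assumes xi: "xi \<in> gla"
  shows "d_iota_pi_at X g (dL g xi) = fst g ** d_iota_pi X xi ** transpose (snd g)"
proof -
  have sk: "transpose (snd xi) = - snd xi" using xi unfolding gla_def by auto
  show ?thesis unfolding d_iota_pi_at_def dL_def d_iota_pi_def
    by (simp add: mnorm sk)
qed

lemma md_has_deriv:
  fixes Y V W :: "real^'k^'n"
  shows "((\<lambda>Z. alpha_metric a Z V W) has_derivative
     (\<lambda>U. - ((2*a+1)/(a+1)) * (trace (transpose V ** U ** transpose Y ** W) + trace (transpose V ** Y ** transpose U ** W)))) (at Y)"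
proof -
  have d1: "((\<lambda>Z. transpose V ** Z) has_derivative (\<lambda>h. transpose V ** h)) (at Y)"
    using bounded_linear.has_derivative[OF bounded_bilinear.bounded_linear_right[OF bb_mm] has_derivative_ident] .
  have dT: "((\<lambda>Z::real^'k^'n. transpose Z) has_derivative (\<lambda>h. transpose h)) (at Y)"
    using bounded_linear.has_derivative[OF bl_transpose has_derivative_ident] .
  have d2: "((\<lambda>Z. transpose V ** Z ** transpose Z) has_derivative
      (\<lambda>h. transpose V ** Y ** transpose h + transpose V ** h ** transpose Y)) (at Y)"
    using bounded_bilinear.FDERIV[OF bb_mm d1 dT] .
  have d3: "((\<lambda>Z. transpose V ** Z ** transpose Z ** W) has_derivative
      (\<lambda>h. (transpose V ** Y ** transpose h + transpose V ** h ** transpose Y) ** W)) (at Y)"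
    using bounded_linear.has_derivative[OF bounded_bilinear.bounded_linear_left[OF bb_mm] d2] .
  have d4: "((\<lambda>Z. trace (transpose V ** Z ** transpose Z ** W)) has_derivative
      (\<lambda>h. trace ((transpose V ** Y ** transpose h + transpose V ** h ** transpose Y) ** W))) (at Y)"
    using bounded_linear.has_derivative[OF bl_trace d3] .
  have d5: "((\<lambda>Z. alpha_metric a Z V W) has_derivative
      (\<lambda>h. 0 - (2*a+1)/(a+1) * trace ((transpose V ** Y ** transpose h + transpose V ** h ** transpose Y) ** W))) (at Y)"
    unfolding alpha_metric_def
    by (intro has_derivative_diff has_derivative_const has_derivative_mult_right d4)
  show ?thesis
    by (rule has_derivative_eq_rhs[OF d5]) (simp add: mm_add_r trace_add fun_eq_iff)
qed

lemma md_eq: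
  fixes Y V W U :: "real^'k^'n"
  shows "metric_deriv a Y U V W = - ((2*a+1)/(a+1)) * (trace (transpose V ** U ** transpose Y ** W) + trace (transpose V ** Y ** transpose U ** W))"
proof -
  have "(\<lambda>U. - ((2*a+1)/(a+1)) * (trace (transpose V ** U ** transpose Y ** W) + trace (transpose V ** Y ** transpose U ** W)))
     = frechet_derivative (\<lambda>Z. alpha_metric a Z V W) (at Y)"
    by (rule frechet_derivative_at[OF md_has_deriv])
  then show ?thesis unfolding metric_deriv_def by (rule fun_cong[OF sym])
qed

lemma koszul_trace:
  fixes X Q V W U :: "real^'k^'n"
  shows "alpha_metric a X Q U + 1/2 * (metric_deriv a X V W U + metric_deriv a X W V U - metric_deriv a X U V W)
    = trace (transpose (2 *\<^sub>R Q - ((2*a+1)/(a+1)) *\<^sub>R (X ** transpose X ** Q) - (((2*a+1)/(a+1))/2) *\<^sub>R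
     (X ** transpose V ** W + V ** transpose X ** W + X ** transpose W ** V + W ** transpose X ** V
      - V ** transpose W ** X - W ** transpose V ** X)) ** U)"
proof -
  have r1: "trace (transpose V ** (U ** (transpose X ** W))) = trace (transpose X ** (W ** (transpose V ** U)))"
    by (metis trace_mul_sym matrix_mul_assoc)
  have r2: "trace (transpose V ** (X ** (transpose U ** W))) = trace (transpose X ** (V ** (transpose W ** U)))"
  proof -
    have "trace (transpose V ** (X ** (transpose U ** W))) = trace (transpose (transpose V ** (X ** (transpose U ** W))))"
      by (simp add: trace_transp)
    also have "\<dots> = trace (transpose W ** (U ** (transpose X ** V)))" by (simp add: mnorm)
    also have "\<dots> = trace (transpose X ** (V ** (transpose W ** U)))" by (metis trace_mul_sym matrix_mul_assoc)
    finally show ?thesis .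
  qed
  define c where "c = (2*a+1)/(a+1)"
  show ?thesis
    unfolding alpha_metric_def md_eq c_def[symmetric]
    apply (simp only: mnorm tnorm r1 r2)
    apply (simp add: field_simps)
    done
qed


lemma keyN2:
  fixes X V W :: "real^'k^'n"
  assumes XX: "transpose X ** X = mat 1"
    and V: "V \<in> tangent_st X" and W: "W \<in> tangent_st X"
  shows "2 *\<^sub>R (fst (Einv a X V) ** W - W ** snd (Einv a X V) - (1/2) *\<^sub>R d_iota_pi X (lie_bracket (Einv a X V) (Einv a X W)))
    - (2 - mm a) *\<^sub>R (X ** transpose X ** (fst (Einv a X V) ** W - W ** snd (Einv a X V) - (1/2) *\<^sub>R d_iota_pi X (lie_bracket (Einv a X V) (Einv a X W))))
    - ((2 - mm a)/2) *\<^sub>R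
     (X ** transpose V ** W + V ** transpose X ** W + X ** transpose W ** V + W ** transpose X ** V
      - V ** transpose W ** X - W ** transpose V ** X)
   = X ** (- (transpose V ** W + transpose W ** V) - (2 - mm a) *\<^sub>R (transpose X ** V ** transpose X ** W + transpose X ** W ** transpose X ** V))"
proof -
  have XV: "transpose V ** X = - (transpose X ** V)" using V by (simp add: tangent_iff)
  have XW: "transpose W ** X = - (transpose X ** W)" using W by (simp add: tangent_iff)
  have XX2: "transpose X ** (X ** M) = M" for M :: "real^'c^'k"
    by (simp add: matrix_mul_assoc XX)
  have XV2: "transpose V ** (X ** M) = - (transpose X ** (V ** M))" for M :: "real^'c^'k"
    by (simp add: matrix_mul_assoc XV mm_neg_l)
  have XW2: "transpose W ** (X ** M) = - (transpose X ** (W ** M))" for M :: "real^'c^'k"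
    by (simp add: matrix_mul_assoc XW mm_neg_l)
  show ?thesis
    unfolding Einv_def lie_bracket_def d_iota_pi_def fst_conv snd_conv
    apply (simp only: mnorm XX XX2 XV XV2 XW XW2 matrix_mul_lid matrix_mul_rid)
    apply (simp add: vec_eq_iff)
    apply (simp add: field_simps)
    done
qed

lemma koszul_X:
  fixes X V W U :: "real^'k^'n"
  assumes XX: "transpose X ** X = mat 1" and a: "a \<noteq> -1"
    and V: "V \<in> tangent_st X" and W: "W \<in> tangent_st X" and U: "U \<in> tangent_st X"
  shows "alpha_metric a X (fst (Einv a X V) ** W - W ** snd (Einv a X V) - (1/2) *\<^sub>R d_iota_pi X (lie_bracket (Einv a X V) (Einv a X W))) U
     + 1/2 * (metric_deriv a X V W U + metric_deriv a X W V U - metric_deriv a X U V W) = 0"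
proof -
  define S where "S = (- (transpose V ** W + transpose W ** V) - (2 - mm a) *\<^sub>R (transpose X ** V ** transpose X ** W + transpose X ** W ** transpose X ** V))"
  have XV: "transpose V ** X = - (transpose X ** V)" using V by (simp add: tangent_iff)
  have XW: "transpose W ** X = - (transpose X ** W)" using W by (simp add: tangent_iff)
  have St: "transpose S = S" unfolding S_def
    by (simp add: mnorm XV XW algebra_simps)
  have Us: "transpose (transpose X ** U) = - (transpose X ** U)"
    using U by (simp add: tangent_iff matrix_transpose_mul)
  have "trace (transpose (X ** S) ** U) = trace (S ** (transpose X ** U))"
    by (simp add: matrix_transpose_mul St matrix_mul_assoc)
  also have "\<dots> = 0" by (rule trace_sym_skew[OF St Us])
  finally have z: "trace (transpose (X ** S) ** U) = 0" .
  show ?thesis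
    unfolding koszul_trace c_eq[OF a] using keyN2[OF XX V W, of a] z unfolding S_def by simp
qed

lemma orth_facts: "orthogonal_matrix (R::real^'n^'n) \<Longrightarrow> transpose R ** R = mat 1 \<and> R ** transpose R = mat 1"
  by (simp add: orthogonal_matrix_def)

lemma trace_conj:
  assumes "transpose T ** T = mat 1"
  shows "trace (T ** A ** transpose (T::real^'k^'k)) = trace A"
proof -
  have "trace (T ** A ** transpose T) = trace ((A ** transpose T) ** T)"
    by (metis trace_mul_sym matrix_mul_assoc)
  also have "\<dots> = trace A" by (simp add: matrix_mul_assoc[symmetric] assms)
  finally show ?thesis .
qed

lemma am_inv:
  fixes R :: "real^'n^'n" and T :: "real^'k^'k" and Y M N :: "real^'k^'n"
  assumes R: "transpose R ** R = mat 1" and T: "transpose T ** T = mat 1"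
  shows "alpha_metric a (R ** Y ** transpose T) (R ** M ** transpose T) (R ** N ** transpose T) = alpha_metric a Y M N"
proof -
  have R2: "transpose R ** (R ** Z) = Z" for Z :: "real^'c^'n" by (simp add: matrix_mul_assoc R)
  have T2: "transpose T ** (T ** Z) = Z" for Z :: "real^'c^'k" by (simp add: matrix_mul_assoc T)
  have e1: "transpose (R ** M ** transpose T) ** (R ** N ** transpose T) = T ** (transpose M ** N) ** transpose T"
    by (simp add: mnorm R R2)
  have e2: "transpose (R ** M ** transpose T) ** (R ** Y ** transpose T) ** transpose (R ** Y ** transpose T) ** (R ** N ** transpose T)
     = T ** (transpose M ** Y ** transpose Y ** N) ** transpose T"
    by (simp add: mnorm R R2 T T2)
  show ?thesis unfolding alpha_metric_def e1 e2 trace_conj[OF T] ..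
qed

lemma md_inv:
  fixes R :: "real^'n^'n" and T :: "real^'k^'k" and Y U M N :: "real^'k^'n"
  assumes R: "transpose R ** R = mat 1" and T: "transpose T ** T = mat 1"
  shows "metric_deriv a (R ** Y ** transpose T) (R ** U ** transpose T) (R ** M ** transpose T) (R ** N ** transpose T) = metric_deriv a Y U M N"
proof -
  have R2: "transpose R ** (R ** Z) = Z" for Z :: "real^'c^'n" by (simp add: matrix_mul_assoc R)
  have T2: "transpose T ** (T ** Z) = Z" for Z :: "real^'c^'k" by (simp add: matrix_mul_assoc T)
  have e1: "transpose (R ** M ** transpose T) ** (R ** U ** transpose T) ** transpose (R ** Y ** transpose T) ** (R ** N ** transpose T)
     = T ** (transpose M ** U ** transpose Y ** N) ** transpose T"
    by (simp add: mnorm R R2 T T2)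
  have e2: "transpose (R ** M ** transpose T) ** (R ** Y ** transpose T) ** transpose (R ** U ** transpose T) ** (R ** N ** transpose T)
     = T ** (transpose M ** Y ** transpose U ** N) ** transpose T"
    by (simp add: mnorm R R2 T T2)
  show ?thesis unfolding md_eq e1 e2 trace_conj[OF T] ..
qed

lemma tangent_conj:
  fixes R :: "real^'n^'n" and T :: "real^'k^'k" and Y U :: "real^'k^'n"
  assumes R: "transpose R ** R = mat 1" and T: "transpose T ** T = mat 1"
  shows "R ** U ** transpose T \<in> tangent_st (R ** Y ** transpose T) \<longleftrightarrow> U \<in> tangent_st Y"
proof -
  have R2: "transpose R ** (R ** Z) = Z" for Z :: "real^'c^'n" by (simp add: matrix_mul_assoc R)
  have e: "transpose (R ** Y ** transpose T) ** (R ** U ** transpose T) + transpose (R ** U ** transpose T) ** (R ** Y ** transpose T)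
    = T ** (transpose Y ** U + transpose U ** Y) ** transpose T"
    by (simp add: mnorm R R2)
  have T2: "transpose T ** (T ** Z) = Z" for Z :: "real^'c^'k" by (simp add: matrix_mul_assoc T)
  have inv: "transpose T ** (T ** Z ** transpose T) ** T = Z" for Z :: "real^'k^'k"
    by (simp add: mnorm T T2)
  show ?thesis unfolding tangent_st_def mem_Collect_eq e
    by (metis inv mm_zero_l mm_zero_r)
qed

lemma conj_back:
  fixes R :: "real^'n^'n" and T :: "real^'k^'k" and U :: "real^'k^'n"
  assumes "R ** transpose R = mat 1" and "T ** transpose T = mat 1"
  shows "R ** (transpose R ** U ** T) ** transpose T = U"
  by (simp add: mnorm assms matrix_mul_assoc[of R "transpose R"] )

lemma nondeg:
  fixes Y M :: "real^'k^'n"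
  assumes Y: "transpose Y ** Y = mat 1" and a: "a \<noteq> -1" and M: "M \<in> tangent_st Y"
    and h: "\<forall>U\<in>tangent_st Y. alpha_metric a Y M U = 0"
  shows "M = 0"
proof -
  obtain Om Kp where 1: "M = Y ** Om + Kp" "transpose Y ** Kp = 0" "transpose Om = - Om"
    using decomp[OF Y M] by blast
  have ma: "mm a * (a + 1) = 1" using a unfolding mm_def by (simp add: field_simps)
  then have m0: "mm a \<noteq> 0" by auto
  define U where "U = (1 / mm a) *\<^sub>R (Y ** Om) + Kp"
  have XX2: "transpose Y ** (Y ** N) = N" for N :: "real^'c^'k"
    by (simp add: matrix_mul_assoc Y)
  have XK2: "transpose Y ** (Kp ** N) = 0" for N :: "real^'c^'k"
    by (simp add: matrix_mul_assoc 1(2))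
  have KX: "transpose Kp ** Y = 0" using 1(2)
    by (metis matrix_transpose_mul transpose_transpose tr_zero)
  have KX2: "transpose Kp ** (Y ** N) = 0" for N :: "real^'c^'k"
    by (simp add: matrix_mul_assoc KX)
  have UT: "U \<in> tangent_st Y" unfolding tangent_st_def U_def
    by (simp add: mnorm Y XX2 1(2) KX 1(3))
  have "alpha_metric a Y M U = trace (transpose Om ** Om) + 2 * trace (transpose Kp ** Kp)"
    unfolding alpha_metric_def U_def 1(1) c_eq[OF a]
    apply (simp only: mnorm Y XX2 1(2) XK2 KX KX2 matrix_mul_lid matrix_mul_rid tnorm)
    using m0 apply (simp add: field_simps)
    done
  with h UT have e: "trace (transpose Om ** Om) + 2 * trace (transpose Kp ** Kp) = 0" by auto
  have "trace (transpose Om ** Om) = 0" "trace (transpose Kp ** Kp) = 0"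
    using e trace_sq_nonneg[of Om] trace_sq_nonneg[of Kp] by linarith+
  then have "Om = 0" "Kp = 0" using trace_sq_zero by blast+
  then show ?thesis using 1(1) by simp
qed

lemma linear_Einv: "linear (Einv a X)"
  unfolding linear_iff Einv_def by (simp add: mnorm algebra_simps)

lemma linear_dd: "linear (d_iota_pi X)"
  unfolding linear_iff by (simp add: dd_add dd_scale)

lemma bl_dd: "bounded_linear (d_iota_pi X)"
  using linear_dd linear_conv_bounded_linear by blast

definition PiT :: "real^'k^'n \<Rightarrow> real^'k^'n \<Rightarrow> real^'k^'n" where
  "PiT X V = V - (1/2) *\<^sub>R (X ** (transpose X ** V + transpose V ** X))"

lemma linear_PiT: "linear (PiT X)"
  unfolding linear_iff PiT_def by (simp add: mnorm algebra_simps)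

lemma PiT_tangent:
  fixes X :: "real^'k^'n"
  assumes X: "transpose X ** X = mat 1" shows "PiT X V \<in> tangent_st X"
proof -
  have XX2: "transpose X ** (X ** N) = N" for N :: "real^'c^'k"
    by (simp add: matrix_mul_assoc X)
  show ?thesis
  unfolding PiT_def tangent_st_def
  apply (simp only: mnorm XX2 X mem_Collect_eq matrix_mul_lid)
  apply (simp add: vec_eq_iff algebra_simps)
  done
qed

lemma PiT_id: "V \<in> tangent_st X \<Longrightarrow> PiT X V = V"
  unfolding PiT_def tangent_st_def by simp

lemma linear_lie: "linear (lie_bracket w)"
  unfolding linear_iff lie_bracket_def by (simp add: mnorm algebra_simps)

lemma lie_gla: "w \<in> gla \<Longrightarrow> x \<in> gla \<Longrightarrow> lie_bracket w x \<in> gla"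
  unfolding gla_def lie_bracket_def by (auto simp: mnorm)

lemma ip_add1: "ip_alpha a (x + y) h = ip_alpha a x h + ip_alpha a y h"
  unfolding ip_alpha_def by (simp add: mm_add_r trace_add algebra_simps)
lemma ip_scale1: "ip_alpha a (c *\<^sub>R x) h = c * ip_alpha a x h"
  unfolding ip_alpha_def by (simp add: mm_scale_l trace_scale algebra_simps)

lemma pla_add: "x \<in> pla a X \<Longrightarrow> y \<in> pla a X \<Longrightarrow> x + y \<in> pla a X"
  unfolding pla_def by (auto simp: gla_add ip_add1)
lemma pla_scale: "x \<in> pla a X \<Longrightarrow> c *\<^sub>R x \<in> pla a X"
  unfolding pla_def by (auto simp: gla_scale ip_scale1)
lemma pla_zero: "0 \<in> pla a X"
  unfolding pla_def by (auto simp: gla_zero ip_alpha_def trace_zero)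

lemma pla_sum: "finite A \<Longrightarrow> (\<forall>i\<in>A. x i \<in> pla a X) \<Longrightarrow> (\<Sum>i\<in>A. c i *\<^sub>R x i) \<in> pla a X"
  by (induction A rule: finite_induct) (auto simp: pla_zero pla_add pla_scale)

lemma Op_lin: "T \<in> O_p a X \<Longrightarrow> x \<in> pla a X \<Longrightarrow> y \<in> pla a X \<Longrightarrow> T (c *\<^sub>R x + d *\<^sub>R y) = c *\<^sub>R T x + d *\<^sub>R T y"
  unfolding O_p_def by blast

lemma Op_add: "T \<in> O_p a X \<Longrightarrow> x \<in> pla a X \<Longrightarrow> y \<in> pla a X \<Longrightarrow> T (x + y) = T x + T y"
  using Op_lin[of T a X x y 1 1] by simp

lemma Op_scale: "T \<in> O_p a X \<Longrightarrow> x \<in> pla a X \<Longrightarrow> T (c *\<^sub>R x) = c *\<^sub>R T x"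
  using Op_lin[of T a X x x c 0] by simp

lemma Op_sum:
  assumes T: "T \<in> O_p a X"
  shows "finite A \<Longrightarrow> (\<forall>i\<in>A. x i \<in> pla a X) \<Longrightarrow>
   T (\<Sum>i\<in>A. c i *\<^sub>R x i) = (\<Sum>i\<in>A. c i *\<^sub>R T (x i))"
proof (induction A rule: finite_induct)
  case empty
  have "T (0 *\<^sub>R 0 + 0 *\<^sub>R 0) = 0 *\<^sub>R T 0 + 0 *\<^sub>R T 0"
    using Op_lin[OF T pla_zero pla_zero] .
  then show ?case by simp
next
  case (insert i A)
  have xi: "x i \<in> pla a X" and xA: "\<forall>i\<in>A. x i \<in> pla a X" using insert.prems by auto
  have "T (c i *\<^sub>R x i + 1 *\<^sub>R (\<Sum>i\<in>A. c i *\<^sub>R x i)) = c i *\<^sub>R T (x i) + 1 *\<^sub>R T (\<Sum>i\<in>A. c i *\<^sub>R x i)"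
    using Op_lin[OF T xi pla_sum[OF insert(1) xA]] .
  then show ?case using insert.IH[OF xA] insert(1,2) by simp
qed

lemma Op_pla: "T \<in> O_p a X \<Longrightarrow> x \<in> pla a X \<Longrightarrow> T x \<in> pla a X"
  unfolding O_p_def bij_betw_def by blast

lemma tan_deriv:
  fixes f :: "real \<Rightarrow> real^'k^'n"
  assumes T: "\<forall>s\<in>I. f s \<in> tangent_st X" and t: "t \<in> I" and nb: "at t within I \<noteq> bot"
    and d: "(f has_vector_derivative f') (at t within I)"
  shows "f' \<in> tangent_st X"
proof -
  define phi where "phi = (\<lambda>V::real^'k^'n. transpose X ** V + transpose V ** X)"
  have bl: "bounded_linear phi"
    unfolding phi_def linear_conv_bounded_linear[symmetric] linear_iff by (simp add: mnorm algebra_simps)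
  have d1: "((\<lambda>s. phi (f s)) has_vector_derivative phi f') (at t within I)"
    using bounded_linear.has_vector_derivative[OF bl d] .
  have d2: "((\<lambda>s. phi (f s)) has_vector_derivative 0) (at t within I)"
    by (rule has_vector_derivative_transform[OF t _ has_vector_derivative_const])
      (use T in \<open>auto simp: phi_def tangent_st_def\<close>)
  have "phi f' = 0" using vector_derivative_unique_within[OF nb d1 d2] .
  then show ?thesis unfolding phi_def tangent_st_def by simp
qed

lemma Y_deriv:
  fixes R :: "real \<Rightarrow> real^'n^'n" and T :: "real \<Rightarrow> real^'k^'k" and X :: "real^'k^'n"
  assumes d: "((\<lambda>s. (R s, T s)) has_vector_derivative v) (at t within I)"
  shows "((\<lambda>s. iota_pi X (R s, T s)) has_vector_derivative d_iota_pi_at X (R t, T t) v) (at t within I)"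
proof -
  have dR: "(R has_vector_derivative fst v) (at t within I)"
    using bounded_linear.has_vector_derivative[OF bounded_linear_fst d] by simp
  have dT: "(T has_vector_derivative snd v) (at t within I)"
    using bounded_linear.has_vector_derivative[OF bounded_linear_snd d] by simp
  have d1: "((\<lambda>s. R s ** X) has_vector_derivative fst v ** X) (at t within I)"
    using bounded_linear.has_vector_derivative[OF bounded_bilinear.bounded_linear_left[OF bb_mm] dR] .
  have d2: "((\<lambda>s. transpose (T s)) has_vector_derivative transpose (snd v)) (at t within I)"
    using bounded_linear.has_vector_derivative[OF bl_transpose dT] .
  have d3: "((\<lambda>s. R s ** X ** transpose (T s)) has_vector_derivative
      R t ** X ** transpose (snd v) + fst v ** X ** transpose (T t)) (at t within I)"
    using bounded_bilinear.has_vector_derivative[OF bb_mm d1 d2] .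
  show ?thesis unfolding iota_pi_def d_iota_pi_at_def fst_conv snd_conv
    using d3 by (simp add: add.commute)
qed

lemma am_add1: "alpha_metric a Y (M + N) U = alpha_metric a Y M U + alpha_metric a Y N U"
  unfolding alpha_metric_def by (simp add: mnorm tnorm algebra_simps)
lemma am_zero1: "alpha_metric a Y 0 U = 0"
  unfolding alpha_metric_def by (simp add: mnorm tnorm)
lemma md_zeros: "metric_deriv a Y 0 V W = 0" "metric_deriv a Y V 0 W = 0" "metric_deriv a Y V W 0 = 0"
  unfolding md_eq by (simp_all add: mnorm tnorm)

lemma tan_lin: "V \<in> tangent_st X \<Longrightarrow> W \<in> tangent_st X \<Longrightarrow> c *\<^sub>R V + d *\<^sub>R W \<in> tangent_st X"
proof -
  assume V: "V \<in> tangent_st X" and W: "W \<in> tangent_st X"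
  have "transpose X ** (c *\<^sub>R V + d *\<^sub>R W) + transpose (c *\<^sub>R V + d *\<^sub>R W) ** X
     = c *\<^sub>R (transpose X ** V + transpose V ** X) + d *\<^sub>R (transpose X ** W + transpose W ** X)"
    by (simp add: mnorm algebra_simps)
  then show ?thesis using V W unfolding tangent_st_def by simp
qed

lemma iso_dd:
  fixes X :: "real^'k^'n"
  assumes X: "transpose X ** X = mat 1" and a: "a \<noteq> -1" "a \<noteq> 0" and x: "x \<in> pla a X" and y: "y \<in> pla a X"
  shows "alpha_metric a X (d_iota_pi X x) (d_iota_pi X y) = ip_alpha a x y"
  using iso_Einv[OF X dd_tangent[OF X pla_gla[OF x]] dd_tangent[OF X pla_gla[OF y]] a] Einv_dd[OF X x a] Einv_dd[OF X y a]
  by simp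

lemma bij_Einv:
  fixes X :: "real^'k^'n"
  assumes X: "transpose X ** X = mat 1" and a: "a \<noteq> -1" "a \<noteq> 0"
  shows "bij_betw (Einv a X) (tangent_st X) (pla a X)"
proof (rule bij_betw_byWitness[where f'="d_iota_pi X"])
  show "\<forall>V\<in>tangent_st X. d_iota_pi X (Einv a X V) = V" using Einv_gla_dd(2)[OF X] by blast
  show "\<forall>x\<in>pla a X. Einv a X (d_iota_pi X x) = x" using Einv_dd[OF X _ a] by blast
  show "Einv a X ` tangent_st X \<subseteq> pla a X" using Einv_pla[OF X _ a] by blast
  show "d_iota_pi X ` pla a X \<subseteq> tangent_st X" using dd_tangent[OF X pla_gla] by blast
qed

lemma bij_dd:
  fixes X :: "real^'k^'n"
  assumes X: "transpose X ** X = mat 1" and a: "a \<noteq> -1" "a \<noteq> 0"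
  shows "bij_betw (d_iota_pi X) (pla a X) (tangent_st X)"
proof (rule bij_betw_byWitness[where f'="Einv a X"])
  show "\<forall>V\<in>tangent_st X. d_iota_pi X (Einv a X V) = V" using Einv_gla_dd(2)[OF X] by blast
  show "\<forall>x\<in>pla a X. Einv a X (d_iota_pi X x) = x" using Einv_dd[OF X _ a] by blast
  show "Einv a X ` tangent_st X \<subseteq> pla a X" using Einv_pla[OF X _ a] by blast
  show "d_iota_pi X ` pla a X \<subseteq> tangent_st X" using dd_tangent[OF X pla_gla] by blast
qed

lemma bij_conj:
  fixes R :: "real^'n^'n" and T :: "real^'k^'k" and Y :: "real^'k^'n"
  assumes R: "orthogonal_matrix R" and T: "orthogonal_matrix T"
  shows "bij_betw (\<lambda>M. R ** M ** transpose T) (tangent_st Y) (tangent_st (R ** Y ** transpose T))"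
proof (rule bij_betw_byWitness[where f'="\<lambda>U. transpose R ** U ** T"])
  have R1: "transpose R ** R = mat 1" "R ** transpose R = mat 1" and T1: "transpose T ** T = mat 1" "T ** transpose T = mat 1"
    using R T by (auto simp: orthogonal_matrix_def)
  have R2: "transpose R ** (R ** Z) = Z" for Z :: "real^'c^'n" by (simp add: matrix_mul_assoc R1)
  have T2: "transpose T ** (T ** Z) = Z" for Z :: "real^'c^'k" by (simp add: matrix_mul_assoc T1)
  have R3: "R ** (transpose R ** Z) = Z" for Z :: "real^'c^'n" by (simp add: matrix_mul_assoc R1)
  have T3: "T ** (transpose T ** Z) = Z" for Z :: "real^'c^'k" by (simp add: matrix_mul_assoc T1)
  show "\<forall>a\<in>tangent_st Y. transpose R ** (R ** a ** transpose T) ** T = a"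
    by (simp add: mnorm R1 T1 R2 T2)
  have bk: "R ** (transpose R ** U ** T) ** transpose T = U" for U :: "real^'k^'n"
    by (simp add: mnorm R1 T1 R3 T3)
  show "\<forall>a'\<in>tangent_st (R ** Y ** transpose T). R ** (transpose R ** a' ** T) ** transpose T = a'"
    using bk by simp
  show "(\<lambda>M. R ** M ** transpose T) ` tangent_st Y \<subseteq> tangent_st (R ** Y ** transpose T)"
    using tangent_conj[OF R1(1) T1(1)] by auto
  show "(\<lambda>U. transpose R ** U ** T) ` tangent_st (R ** Y ** transpose T) \<subseteq> tangent_st Y"
  proof
    fix V assume "V \<in> (\<lambda>U. transpose R ** U ** T) ` tangent_st (R ** Y ** transpose T)"
    then obtain U where U: "U \<in> tangent_st (R ** Y ** transpose T)" "V = transpose R ** U ** T" by auto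
    then have "R ** V ** transpose T \<in> tangent_st (R ** Y ** transpose T)" using bk by simp
    then show "V \<in> tangent_st Y" using tangent_conj[OF R1(1) T1(1)] by blast
  qed
qed

lemma lin_iso_gen:
  fixes R0 :: "real^'n^'n" and T0 :: "real^'k^'k" and X :: "real^'k^'n"
  assumes X: "transpose X ** X = mat 1" and a: "a \<noteq> -1" "a \<noteq> 0"
    and R: "orthogonal_matrix R0" and T: "orthogonal_matrix T0" and S0: "S0 \<in> O_p a X"
    and BB: "\<forall>V\<in>tangent_st X. BB V = R0 ** d_iota_pi X (S0 (Einv a X V)) ** transpose T0"
  shows "lin_isometry_st a X (R0 ** X ** transpose T0) BB"
  unfolding lin_isometry_st_def
proof (intro conjI ballI allI)
  have R1: "transpose R0 ** R0 = mat 1" and T1: "transpose T0 ** T0 = mat 1"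
    using R T by (auto simp: orthogonal_matrix_def)
  fix V W assume V: "V \<in> tangent_st X" and W: "W \<in> tangent_st X"
  {
    fix c d :: real
    have EV: "Einv a X V \<in> pla a X" "Einv a X W \<in> pla a X" using Einv_pla[OF X V a] Einv_pla[OF X W a] by auto
    have "Einv a X (c *\<^sub>R V + d *\<^sub>R W) = c *\<^sub>R Einv a X V + d *\<^sub>R Einv a X W"
      using linear_Einv[of a X] by (simp add: linear_add linear_scale)
    then have "S0 (Einv a X (c *\<^sub>R V + d *\<^sub>R W)) = c *\<^sub>R S0 (Einv a X V) + d *\<^sub>R S0 (Einv a X W)"
      using Op_lin[OF S0 EV] by simp
    then show "BB (c *\<^sub>R V + d *\<^sub>R W) = c *\<^sub>R BB V + d *\<^sub>R BB W"
      using BB tan_lin[OF V W, of c d] V W by (simp add: dd_add dd_scale mnorm)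
  }
  have EV: "Einv a X V \<in> pla a X" "Einv a X W \<in> pla a X" using Einv_pla[OF X V a] Einv_pla[OF X W a] by auto
  have SE: "S0 (Einv a X V) \<in> pla a X" "S0 (Einv a X W) \<in> pla a X" using Op_pla[OF S0] EV by auto
  have "alpha_metric a (R0 ** X ** transpose T0) (BB V) (BB W)
      = alpha_metric a X (d_iota_pi X (S0 (Einv a X V))) (d_iota_pi X (S0 (Einv a X W)))"
    using BB V W am_inv[OF R1 T1] by simp
  also have "\<dots> = ip_alpha a (S0 (Einv a X V)) (S0 (Einv a X W))" using iso_dd[OF X a SE] .
  also have "\<dots> = ip_alpha a (Einv a X V) (Einv a X W)" using S0 EV unfolding O_p_def by blast
  also have "\<dots> = alpha_metric a X V W" using iso_Einv[OF X V W a] .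
  finally show "alpha_metric a (R0 ** X ** transpose T0) (BB V) (BB W) = alpha_metric a X V W" .
next
  have R1: "transpose R0 ** R0 = mat 1" and T1: "transpose T0 ** T0 = mat 1"
    using R T by (auto simp: orthogonal_matrix_def)
  have bS: "bij_betw S0 (pla a X) (pla a X)" using S0 unfolding O_p_def by blast
  have "bij_betw ((\<lambda>M. R0 ** M ** transpose T0) \<circ> (d_iota_pi X \<circ> (S0 \<circ> Einv a X))) (tangent_st X) (tangent_st (R0 ** X ** transpose T0))"
    by (rule bij_betw_trans[OF bij_betw_trans[OF bij_betw_trans[OF bij_Einv[OF X a] bS] bij_dd[OF X a]] bij_conj[OF R T]])
  then show "bij_betw BB (tangent_st X) (tangent_st (R0 ** X ** transpose T0))"
    by (rule iffD1[OF bij_betw_cong, rotated]) (simp add: BB)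
qed

lemma S_expand:
  fixes X V :: "real^'k^'n"
  assumes X: "transpose X ** X = mat 1" and a: "a \<noteq> -1" "a \<noteq> 0" and S0: "S0 \<in> O_p a X" and V: "V \<in> tangent_st X"
  shows "S0 (Einv a X V) = (\<Sum>i\<in>Basis. (V \<bullet> i) *\<^sub>R S0 (Einv a X (PiT X i)))"
proof -
  have "V = PiT X (\<Sum>i\<in>Basis. (V \<bullet> i) *\<^sub>R i)" using PiT_id[OF V] by (simp add: euclidean_representation)
  also have "\<dots> = (\<Sum>i\<in>Basis. (V \<bullet> i) *\<^sub>R PiT X i)"
    using linear_PiT[of X] by (simp add: linear_sum linear_scale)
  finally have "Einv a X V = Einv a X (\<Sum>i\<in>Basis. (V \<bullet> i) *\<^sub>R PiT X i)" by simp
  also have "\<dots> = (\<Sum>i\<in>Basis. (V \<bullet> i) *\<^sub>R Einv a X (PiT X i))"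
    using linear_Einv[of a X] by (simp add: linear_sum linear_scale)
  finally have "S0 (Einv a X V) = S0 (\<Sum>i\<in>Basis. (V \<bullet> i) *\<^sub>R Einv a X (PiT X i))" by simp
  also have "\<dots> = (\<Sum>i\<in>Basis. (V \<bullet> i) *\<^sub>R S0 (Einv a X (PiT X i)))"
    by (rule Op_sum[OF S0 finite_Basis]) (use Einv_pla[OF X PiT_tangent[OF X] a] in blast)
  finally show ?thesis .
qed

lemma dd_neg: "d_iota_pi X (- x) = - d_iota_pi X x"
  unfolding d_iota_pi_def by (simp add: mnorm algebra_simps)

lemma dd_pr:
  fixes X :: "real^'k^'n"
  assumes X: "transpose X ** X = mat 1" and a: "a \<noteq> -1" "a \<noteq> 0" and xi: "xi \<in> gla"
  shows "d_iota_pi X (pr_p a X xi) = d_iota_pi X xi"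
  using pr_eq[OF X xi a] Einv_gla_dd(2)[OF X dd_tangent[OF X xi]] by simp

lemma W_deriv:
  fixes R :: "real \<Rightarrow> real^'n^'n" and T :: "real \<Rightarrow> real^'k^'k" and X :: "real^'k^'n"
    and Z :: "real \<Rightarrow> real^'k^'n"
  assumes X: "transpose X ** X = mat 1" and a: "a \<noteq> -1" "a \<noteq> 0" and t: "t \<in> I"
    and SO: "\<forall>s\<in>I. S s \<in> O_p a X"
    and Sd: "\<forall>\<xi>\<in>pla a X. ((\<lambda>s. S s \<xi>) has_vector_derivative (- (1/2)) *\<^sub>R pr_p a X (lie_bracket w (S t \<xi>))) (at t within I)"
    and RT: "((\<lambda>s. (R s, T s)) has_vector_derivative dL (R t, T t) w) (at t within I)"
    and w: "w \<in> pla a X"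
    and ZT: "\<forall>s\<in>I. Z s \<in> tangent_st X" and Zd: "(Z has_vector_derivative Zd) (at t within I)"
    and ZdT: "Zd \<in> tangent_st X"
  shows "((\<lambda>s. R s ** d_iota_pi X (S s (Einv a X (Z s))) ** transpose (T s)) has_vector_derivative
    R t ** (fst w ** d_iota_pi X (S t (Einv a X (Z t)))
       + (d_iota_pi X (S t (Einv a X Zd)) - (1/2) *\<^sub>R d_iota_pi X (lie_bracket w (S t (Einv a X (Z t)))))
       - d_iota_pi X (S t (Einv a X (Z t))) ** snd w) ** transpose (T t)) (at t within I)"
proof -
  define e where "e = (\<lambda>i. Einv a X (PiT X i))"
  have e: "e i \<in> pla a X" for i unfolding e_def using Einv_pla[OF X PiT_tangent[OF X] a] .
  have St: "S t \<in> O_p a X" using SO t by blast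
  define F where "F = (\<lambda>s. \<Sum>i\<in>Basis. (Z s \<bullet> i) *\<^sub>R d_iota_pi X (S s (e i)))"
  have Fexp: "d_iota_pi X (S s (Einv a X V)) = (\<Sum>i\<in>Basis. (V \<bullet> i) *\<^sub>R d_iota_pi X (S s (e i)))"
    if "s \<in> I" "V \<in> tangent_st X" for s V
    using S_expand[OF X a _ that(2), of "S s"] SO that(1) linear_dd[of X] unfolding e_def
    by (simp add: linear_sum linear_scale)
  have FD: "F s = d_iota_pi X (S s (Einv a X (Z s)))" if "s \<in> I" for s
    unfolding F_def using Fexp[OF that] ZT that by simp
  define F' where "F' = (\<Sum>i\<in>Basis. (Z t \<bullet> i) *\<^sub>R d_iota_pi X ((- (1/2)) *\<^sub>R pr_p a X (lie_bracket w (S t (e i))))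
                                + (Zd \<bullet> i) *\<^sub>R d_iota_pi X (S t (e i)))"
  have dF: "(F has_vector_derivative F') (at t within I)"
    unfolding F_def F'_def
  proof (rule has_vector_derivative_sum)
    fix i :: "real^'k^'n" assume "i \<in> Basis"
    have d1: "((\<lambda>s. Z s \<bullet> i) has_vector_derivative Zd \<bullet> i) (at t within I)"
      using bounded_linear.has_vector_derivative[OF bounded_linear_inner_left Zd] .
    have d2: "((\<lambda>s. d_iota_pi X (S s (e i))) has_vector_derivative
        d_iota_pi X ((- (1/2)) *\<^sub>R pr_p a X (lie_bracket w (S t (e i))))) (at t within I)"
      using bounded_linear.has_vector_derivative[OF bl_dd Sd[rule_format, OF e]] .
    show "((\<lambda>s. (Z s \<bullet> i) *\<^sub>R d_iota_pi X (S s (e i))) has_vector_derivative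
        (Z t \<bullet> i) *\<^sub>R d_iota_pi X ((- (1/2)) *\<^sub>R pr_p a X (lie_bracket w (S t (e i)))) + (Zd \<bullet> i) *\<^sub>R d_iota_pi X (S t (e i)))
        (at t within I)"
      using bounded_bilinear.has_vector_derivative[OF bounded_bilinear_scaleR d1 d2] .
  qed
  define nu where "nu = S t (Einv a X (Z t))"
  have Zt: "Z t \<in> tangent_st X" using ZT t by blast
  have nu_sum: "nu = (\<Sum>i\<in>Basis. (Z t \<bullet> i) *\<^sub>R S t (e i))"
    unfolding nu_def e_def using S_expand[OF X a St Zt] .
  have Sei: "S t (e i) \<in> gla" for i using pla_gla[OF Op_pla[OF St e]] .
  have lg: "lie_bracket w (S t (e i)) \<in> gla" for i using lie_gla[OF pla_gla[OF w] Sei] .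
  have lin2: "linear (\<lambda>x. d_iota_pi X (lie_bracket w x))"
    using linear_compose[OF linear_lie linear_dd] by (simp add: o_def)
  have partB: "(\<Sum>i\<in>Basis. (Z t \<bullet> i) *\<^sub>R d_iota_pi X ((- (1/2)) *\<^sub>R pr_p a X (lie_bracket w (S t (e i)))))
      = (- (1/2)) *\<^sub>R d_iota_pi X (lie_bracket w nu)"
  proof -
    have "(\<Sum>i\<in>Basis. (Z t \<bullet> i) *\<^sub>R d_iota_pi X ((- (1/2)) *\<^sub>R pr_p a X (lie_bracket w (S t (e i)))))
      = (\<Sum>i\<in>Basis. (- (1/2)) *\<^sub>R ((Z t \<bullet> i) *\<^sub>R d_iota_pi X (lie_bracket w (S t (e i)))))"
      by (rule sum.cong) (simp_all add: dd_scale dd_neg dd_pr[OF X a lg])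
    also have "\<dots> = (- (1/2)) *\<^sub>R (\<Sum>i\<in>Basis. (Z t \<bullet> i) *\<^sub>R d_iota_pi X (lie_bracket w (S t (e i))))"
      by (simp add: scaleR_sum_right)
    also have "(\<Sum>i\<in>Basis. (Z t \<bullet> i) *\<^sub>R d_iota_pi X (lie_bracket w (S t (e i)))) = d_iota_pi X (lie_bracket w nu)"
      unfolding nu_sum using linear_sum[OF lin2, of "\<lambda>i. (Z t \<bullet> i) *\<^sub>R S t (e i)" Basis] linear_scale[OF lin2]
      by simp
    finally show ?thesis .
  qed
  have partA: "(\<Sum>i\<in>Basis. (Zd \<bullet> i) *\<^sub>R d_iota_pi X (S t (e i))) = d_iota_pi X (S t (Einv a X Zd))"
    using Fexp[OF t ZdT] by simp
  have F'eq: "F' = d_iota_pi X (S t (Einv a X Zd)) - (1/2) *\<^sub>R d_iota_pi X (lie_bracket w nu)"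
    unfolding F'_def sum.distrib partA partB by (simp add: algebra_simps)
  have dR: "(R has_vector_derivative R t ** fst w) (at t within I)"
    using bounded_linear.has_vector_derivative[OF bounded_linear_fst RT] by (simp add: dL_def)
  have dT: "(T has_vector_derivative T t ** snd w) (at t within I)"
    using bounded_linear.has_vector_derivative[OF bounded_linear_snd RT] by (simp add: dL_def)
  have d1: "((\<lambda>s. R s ** F s) has_vector_derivative R t ** F' + (R t ** fst w) ** F t) (at t within I)"
    using bounded_bilinear.has_vector_derivative[OF bb_mm dR dF] .
  have d2: "((\<lambda>s. transpose (T s)) has_vector_derivative transpose (T t ** snd w)) (at t within I)"
    using bounded_linear.has_vector_derivative[OF bl_transpose dT] .
  have d3: "((\<lambda>s. R s ** F s ** transpose (T s)) has_vector_derivative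
      R t ** F t ** transpose (T t ** snd w) + (R t ** F' + (R t ** fst w) ** F t) ** transpose (T t)) (at t within I)"
    using bounded_bilinear.has_vector_derivative[OF bb_mm d1 d2] .
  have d4: "((\<lambda>s. R s ** d_iota_pi X (S s (Einv a X (Z s))) ** transpose (T s)) has_vector_derivative
      R t ** F t ** transpose (T t ** snd w) + (R t ** F' + (R t ** fst w) ** F t) ** transpose (T t)) (at t within I)"
    by (rule has_vector_derivative_transform[OF t _ d3]) (simp add: FD)
  have sk: "transpose (snd w) = - snd w" using pla_gla[OF w] unfolding gla_def by auto
  show ?thesis
    apply (rule has_vector_derivative_eq_rhs[OF d4])
    unfolding FD[OF t] F'eq nu_def
    by (simp add: mnorm sk algebra_simps)
qed


lemma koszul_eval:
  fixes R0 :: "real^'n^'n" and T0 :: "real^'k^'k" and X U :: "real^'k^'n"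
  assumes X: "transpose X ** X = mat 1" and a: "a \<noteq> -1" "a \<noteq> 0"
    and R: "orthogonal_matrix R0" and T: "orthogonal_matrix T0"
    and w: "w \<in> pla a X" and nu: "nu \<in> pla a X"
    and U: "U \<in> tangent_st (R0 ** X ** transpose T0)"
  shows "alpha_metric a (R0 ** X ** transpose T0) (R0 ** (fst w ** d_iota_pi X nu + (d_iota_pi X zeta - (1/2) *\<^sub>R d_iota_pi X (lie_bracket w nu)) - d_iota_pi X nu ** snd w) ** transpose T0) U
   + 1/2 * (metric_deriv a (R0 ** X ** transpose T0) (R0 ** d_iota_pi X w ** transpose T0) (R0 ** d_iota_pi X nu ** transpose T0) U
          + metric_deriv a (R0 ** X ** transpose T0) (R0 ** d_iota_pi X nu ** transpose T0) (R0 ** d_iota_pi X w ** transpose T0) U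
          - metric_deriv a (R0 ** X ** transpose T0) U (R0 ** d_iota_pi X w ** transpose T0) (R0 ** d_iota_pi X nu ** transpose T0))
   = alpha_metric a (R0 ** X ** transpose T0) (R0 ** d_iota_pi X zeta ** transpose T0) U"
proof -
  have R1: "transpose R0 ** R0 = mat 1" "R0 ** transpose R0 = mat 1" and T1: "transpose T0 ** T0 = mat 1" "T0 ** transpose T0 = mat 1"
    using R T by (auto simp: orthogonal_matrix_def)
  define Uh where "Uh = transpose R0 ** U ** T0"
  have R3: "R0 ** (transpose R0 ** Z) = Z" for Z :: "real^'c^'n" by (simp add: matrix_mul_assoc R1)
  have T3: "T0 ** (transpose T0 ** Z) = Z" for Z :: "real^'c^'k" by (simp add: matrix_mul_assoc T1)
  have UU: "U = R0 ** Uh ** transpose T0" unfolding Uh_def by (simp add: mnorm R1 T1 R3 T3)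
  have UhT: "Uh \<in> tangent_st X" using U unfolding UU tangent_conj[OF R1(1) T1(1)] .
  have wT: "d_iota_pi X w \<in> tangent_st X" using dd_tangent[OF X pla_gla[OF w]] .
  have nT: "d_iota_pi X nu \<in> tangent_st X" using dd_tangent[OF X pla_gla[OF nu]] .
  have Ew: "Einv a X (d_iota_pi X w) = w" using Einv_dd[OF X w a] .
  have En: "Einv a X (d_iota_pi X nu) = nu" using Einv_dd[OF X nu a] .
  have K: "alpha_metric a X (fst w ** d_iota_pi X nu - d_iota_pi X nu ** snd w - (1/2) *\<^sub>R d_iota_pi X (lie_bracket w nu)) Uh
     + 1/2 * (metric_deriv a X (d_iota_pi X w) (d_iota_pi X nu) Uh + metric_deriv a X (d_iota_pi X nu) (d_iota_pi X w) Uh - metric_deriv a X Uh (d_iota_pi X w) (d_iota_pi X nu)) = 0"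
    using koszul_X[OF X a(1) wT nT UhT] unfolding Ew En .
  have sp: "fst w ** d_iota_pi X nu + (d_iota_pi X zeta - (1/2) *\<^sub>R d_iota_pi X (lie_bracket w nu)) - d_iota_pi X nu ** snd w
      = (fst w ** d_iota_pi X nu - d_iota_pi X nu ** snd w - (1/2) *\<^sub>R d_iota_pi X (lie_bracket w nu)) + d_iota_pi X zeta"
    by (simp add: algebra_simps)
  show ?thesis
    unfolding UU am_inv[OF R1(1) T1(1)] md_inv[OF R1(1) T1(1)] sp am_add1
    using K by simp
qed

theorem corollary5p8:
  fixes a :: real and X :: "real^'k^'n" and I :: "real set"
    and \<beta> \<beta>' :: "real \<Rightarrow> real^'k^'n"
    and S :: "real \<Rightarrow> (real^'n^'n) \<times> (real^'k^'k) \<Rightarrow> (real^'n^'n) \<times> (real^'k^'k)"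
    and R :: "real \<Rightarrow> real^'n^'n" and \<theta> :: "real \<Rightarrow> real^'k^'k"
  assumes "a \<noteq> -1" and "a \<noteq> 0"
    and "X \<in> stiefel"
    and "is_interval I" and "0 \<in> I"
    and "\<forall>t\<in>I. \<beta> t \<in> tangent_st X"
    and "\<forall>t\<in>I. (\<beta> has_vector_derivative \<beta>' t) (at t within I)"
    and "\<forall>t\<in>I. S t \<in> O_p a X"
    and "\<forall>\<xi>\<in>pla a X. S 0 \<xi> = \<xi>"
    and "\<forall>\<xi>\<in>pla a X. \<forall>t\<in>I. ((\<lambda>s. S s \<xi>) has_vector_derivative
            (- (1/2)) *\<^sub>R pr_p a X (lie_bracket (S t (d_iota_pi_inv a X (\<beta>' t))) (S t \<xi>)))
            (at t within I)"
    and "\<forall>t\<in>I. orthogonal_matrix (R t) \<and> orthogonal_matrix (\<theta> t)"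
    and "R 0 = mat 1" and "\<theta> 0 = mat 1"
    and "\<forall>t\<in>I. ((\<lambda>s. (R s, \<theta> s)) has_vector_derivative
            dL (R t, \<theta> t) (S t (d_iota_pi_inv a X (\<beta>' t)))) (at t within I)"
  shows "intrinsic_rolling a X I \<beta> (\<lambda>t. iota_pi X (R t, \<theta> t))
           (\<lambda>t V. d_iota_pi_at X (R t, \<theta> t) (dL (R t, \<theta> t) (S t (d_iota_pi_inv a X V))))"
proof -
  have a1: "a \<noteq> -1" and a0: "a \<noteq> 0" using assms(1,2) .
  have X: "transpose X ** X = mat 1" using assms(3) stiefel_iff by blast
  note bT = assms(6) and bD = assms(7) and SO = assms(8) and Sd = assms(10) and orth = assms(11) and RTd = assms(14)
  define Y where "Y = (\<lambda>t. iota_pi X (R t, \<theta> t))"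
  define B where "B = (\<lambda>t V. d_iota_pi_at X (R t, \<theta> t) (dL (R t, \<theta> t) (S t (d_iota_pi_inv a X V))))"
  have Yt: "Y t = R t ** X ** transpose (\<theta> t)" for t unfolding Y_def iota_pi_def by simp
  have Beq: "B t V = R t ** d_iota_pi X (S t (Einv a X V)) ** transpose (\<theta> t)"
    if "t \<in> I" "V \<in> tangent_st X" for t V
  proof -
    have "S t (Einv a X V) \<in> gla"
      using pla_gla[OF Op_pla[OF SO[rule_format, OF that(1)] Einv_pla[OF X that(2) a1 a0]]] .
    from d_at_dL[OF this, of X "(R t, \<theta> t)"] show ?thesis unfolding B_def inv_eq[OF X that(2) a1 a0] by simp
  qed
  have oR: "orthogonal_matrix (R t)" and oT: "orthogonal_matrix (\<theta> t)" if "t \<in> I" for t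
    using orth that by auto
  have LI: "lin_isometry_st a X (Y t) (B t)" if t: "t \<in> I" for t
    unfolding Yt using lin_iso_gen[OF X a1 a0 oR[OF t] oT[OF t] SO[rule_format, OF t]] Beq[OF t] by blast
  have Ystief: "Y t \<in> stiefel" if t: "t \<in> I" for t
  proof -
    have R1: "transpose (R t) ** R t = mat 1" and T1: "\<theta> t ** transpose (\<theta> t) = mat 1"
      using oR[OF t] oT[OF t] by (auto simp: orthogonal_matrix_def)
    have R2: "transpose (R t) ** (R t ** Z) = Z" for Z :: "real^'c^'n" by (simp add: matrix_mul_assoc R1)
    have X2: "transpose X ** (X ** Z) = Z" for Z :: "real^'c^'k" by (simp add: matrix_mul_assoc X)
    show ?thesis unfolding stiefel_iff Yt by (simp add: mnorm R2 X2 T1)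
  qed
  have BT: "B t V \<in> tangent_st (Y t)" if "t \<in> I" "V \<in> tangent_st X" for t V
    using LI[OF that(1)] that(2) unfolding lin_isometry_st_def bij_betw_def by blast
  have B0: "B t 0 = 0" if "t \<in> I" for t
  proof -
    have z: "0 \<in> tangent_st X" by (simp add: tangent_st_def tr_zero)
    from LI[OF that] z have "B t (0 *\<^sub>R 0 + 0 *\<^sub>R 0) = 0 *\<^sub>R B t 0 + 0 *\<^sub>R B t 0"
      unfolding lin_isometry_st_def by blast
    then show ?thesis by simp
  qed
  have Yd: "(Y has_vector_derivative B t (\<beta>' t)) (at t within I)" if t: "t \<in> I" for t
    using Y_deriv[OF RTd[rule_format, OF t]] unfolding Y_def B_def .
  have cond2: "\<forall>t\<in>I. \<exists>v. (\<beta> has_vector_derivative v) (at t within I) \<and> (Y has_vector_derivative B t v) (at t within I)"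
    using bD Yd by blast
  define wf where "wf = (\<lambda>t. S t (Einv a X (\<beta>' t)))"
  have cond3: "\<forall>Z. (\<forall>t\<in>I. Z t \<in> tangent_st X \<and> Z differentiable (at t within I)) \<longrightarrow>
      (parallel_along a Y (\<lambda>t. B t (Z t)) I \<longleftrightarrow> (\<forall>t\<in>I. (Z has_vector_derivative 0) (at t within I)))"
  proof (intro allI impI)
    fix Z :: "real \<Rightarrow> real^'k^'n"
    assume ZZ: "\<forall>t\<in>I. Z t \<in> tangent_st X \<and> Z differentiable (at t within I)"
    have ZT: "\<forall>s\<in>I. Z s \<in> tangent_st X" using ZZ by blast
    define nuf where "nuf = (\<lambda>t. S t (Einv a X (Z t)))"
    define Wf where "Wf = (\<lambda>t Zd. R t ** (fst (wf t) ** d_iota_pi X (nuf t)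
       + (d_iota_pi X (S t (Einv a X Zd)) - (1/2) *\<^sub>R d_iota_pi X (lie_bracket (wf t) (nuf t)))
       - d_iota_pi X (nuf t) ** snd (wf t)) ** transpose (\<theta> t))"
    have key: "((\<lambda>s. B s (Z s)) has_vector_derivative Wf t Zd) (at t within I) \<and>
       (\<forall>U\<in>tangent_st (Y t). alpha_metric a (Y t) (Wf t Zd) U
          + 1/2 * (metric_deriv a (Y t) (B t (\<beta>' t)) (B t (Z t)) U + metric_deriv a (Y t) (B t (Z t)) (B t (\<beta>' t)) U
                   - metric_deriv a (Y t) U (B t (\<beta>' t)) (B t (Z t)))
          = alpha_metric a (Y t) (B t Zd) U)"
      if t: "t \<in> I" and nb: "at t within I \<noteq> bot" and Zd: "(Z has_vector_derivative Zd) (at t within I)" for t Zd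
    proof
      have bt: "\<beta>' t \<in> tangent_st X" using tan_deriv[OF bT t nb bD[rule_format, OF t]] .
      have ZdT: "Zd \<in> tangent_st X" using tan_deriv[OF ZT t nb Zd] .
      have Zt: "Z t \<in> tangent_st X" using ZT t by blast
      have St: "S t \<in> O_p a X" using SO t by blast
      have inv: "d_iota_pi_inv a X (\<beta>' t) = Einv a X (\<beta>' t)" using inv_eq[OF X bt a1 a0] .
      have wp: "wf t \<in> pla a X" unfolding wf_def using Op_pla[OF St Einv_pla[OF X bt a1 a0]] .
      have np: "nuf t \<in> pla a X" unfolding nuf_def using Op_pla[OF St Einv_pla[OF X Zt a1 a0]] .
      have Sd': "\<forall>\<xi>\<in>pla a X. ((\<lambda>s. S s \<xi>) has_vector_derivative (- (1/2)) *\<^sub>R pr_p a X (lie_bracket (wf t) (S t \<xi>))) (at t within I)"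
        unfolding wf_def inv[symmetric] using Sd t by blast
      have RT': "((\<lambda>s. (R s, \<theta> s)) has_vector_derivative dL (R t, \<theta> t) (wf t)) (at t within I)"
        unfolding wf_def inv[symmetric] using RTd t by blast
      have WD: "((\<lambda>s. R s ** d_iota_pi X (S s (Einv a X (Z s))) ** transpose (\<theta> s)) has_vector_derivative Wf t Zd) (at t within I)"
        using W_deriv[OF X a1 a0 t SO Sd' RT' wp ZT Zd ZdT] unfolding Wf_def nuf_def .
      show "((\<lambda>s. B s (Z s)) has_vector_derivative Wf t Zd) (at t within I)"
        by (rule has_vector_derivative_transform[OF t _ WD]) (use Beq ZT in auto)
      show "\<forall>U\<in>tangent_st (Y t). alpha_metric a (Y t) (Wf t Zd) U
          + 1/2 * (metric_deriv a (Y t) (B t (\<beta>' t)) (B t (Z t)) U + metric_deriv a (Y t) (B t (Z t)) (B t (\<beta>' t)) U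
                   - metric_deriv a (Y t) U (B t (\<beta>' t)) (B t (Z t)))
          = alpha_metric a (Y t) (B t Zd) U"
      proof
        fix U assume U: "U \<in> tangent_st (Y t)"
        show "alpha_metric a (Y t) (Wf t Zd) U
          + 1/2 * (metric_deriv a (Y t) (B t (\<beta>' t)) (B t (Z t)) U + metric_deriv a (Y t) (B t (Z t)) (B t (\<beta>' t)) U
                   - metric_deriv a (Y t) U (B t (\<beta>' t)) (B t (Z t)))
          = alpha_metric a (Y t) (B t Zd) U"
          unfolding Beq[OF t bt] Beq[OF t Zt] Beq[OF t ZdT] Yt Wf_def
          using koszul_eval[OF X a1 a0 oR[OF t] oT[OF t] wp np U[unfolded Yt], of "S t (Einv a X Zd)"]
          unfolding wf_def nuf_def .
      qed
    qed
    show "parallel_along a Y (\<lambda>t. B t (Z t)) I \<longleftrightarrow> (\<forall>t\<in>I. (Z has_vector_derivative 0) (at t within I))"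
    proof
      assume par: "parallel_along a Y (\<lambda>t. B t (Z t)) I"
      then obtain g' W' where der: "\<forall>t\<in>I. (Y has_vector_derivative g' t) (at t within I)
             \<and> ((\<lambda>t. B t (Z t)) has_vector_derivative W' t) (at t within I)"
        and ks: "\<forall>t\<in>I. B t (Z t) \<in> tangent_st (Y t) \<and>
              (\<forall>U\<in>tangent_st (Y t).
                 alpha_metric a (Y t) (W' t) U
                 + 1/2 * (metric_deriv a (Y t) (g' t) (B t (Z t)) U
                          + metric_deriv a (Y t) (B t (Z t)) (g' t) U
                          - metric_deriv a (Y t) U (g' t) (B t (Z t))) = 0)"
        unfolding parallel_along_def by blast
      show "\<forall>t\<in>I. (Z has_vector_derivative 0) (at t within I)"
      proof
        fix t assume t: "t \<in> I"
        show "(Z has_vector_derivative 0) (at t within I)"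
        proof (cases "at t within I = bot")
          case True then show ?thesis by (rule deriv_bot)
        next
          case False
          define Zd where "Zd = vector_derivative Z (at t within I)"
          have Zd: "(Z has_vector_derivative Zd) (at t within I)"
            unfolding Zd_def using ZZ t vector_derivative_works by blast
          have ZdT: "Zd \<in> tangent_st X" using tan_deriv[OF ZT t False Zd] .
          note k = key[OF t False Zd]
          have g: "g' t = B t (\<beta>' t)"
            using vector_derivative_unique_within[OF False] der Yd t by blast
          have Wq: "W' t = Wf t Zd"
            using vector_derivative_unique_within[OF False] der k t by blast
          have kt: "\<forall>U\<in>tangent_st (Y t). alpha_metric a (Y t) (W' t) U
                 + 1/2 * (metric_deriv a (Y t) (g' t) (B t (Z t)) U
                          + metric_deriv a (Y t) (B t (Z t)) (g' t) U
                          - metric_deriv a (Y t) U (g' t) (B t (Z t))) = 0" using ks t by blast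
          have "\<forall>U\<in>tangent_st (Y t). alpha_metric a (Y t) (B t Zd) U = 0"
            using kt[unfolded g Wq] k by auto
          then have "B t Zd = 0" using nondeg[OF _ a1 BT[OF t ZdT]] Ystief[OF t] unfolding stiefel_iff by blast
          then have "B t Zd = B t 0" using B0[OF t] by simp
          moreover have "inj_on (B t) (tangent_st X)" using LI[OF t] unfolding lin_isometry_st_def bij_betw_def by blast
          moreover have "0 \<in> tangent_st X" by (simp add: tangent_st_def tr_zero)
          ultimately have "Zd = 0" using ZdT by (meson inj_onD)
          then show ?thesis using Zd by simp
        qed
      qed
    next
      assume z: "\<forall>t\<in>I. (Z has_vector_derivative 0) (at t within I)"
      show "parallel_along a Y (\<lambda>t. B t (Z t)) I"
        unfolding parallel_along_def
      proof (intro exI conjI ballI)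
        fix t assume t: "t \<in> I"
        show "(Y has_vector_derivative (if at t within I = bot then 0 else B t (\<beta>' t))) (at t within I)"
        proof (cases "at t within I = bot")
          case True then show ?thesis by (subst if_P[OF True]) (rule deriv_bot[OF True])
        next
          case False then show ?thesis using Yd[OF t] by simp
        qed
        show "((\<lambda>t. B t (Z t)) has_vector_derivative (if at t within I = bot then 0 else Wf t 0)) (at t within I)"
        proof (cases "at t within I = bot")
          case True then show ?thesis by (subst if_P[OF True]) (rule deriv_bot[OF True])
        next
          case False then show ?thesis using key[OF t False z[rule_format, OF t]] by simp
        qed
        show "B t (Z t) \<in> tangent_st (Y t)" using BT[OF t] ZT t by blast
      next
        fix t U assume t: "t \<in> I" and U: "U \<in> tangent_st (Y t)"
        show "alpha_metric a (Y t) (if at t within I = bot then 0 else Wf t 0) U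
                 + 1/2 * (metric_deriv a (Y t) (if at t within I = bot then 0 else B t (\<beta>' t)) (B t (Z t)) U
                          + metric_deriv a (Y t) (B t (Z t)) (if at t within I = bot then 0 else B t (\<beta>' t)) U
                          - metric_deriv a (Y t) U (if at t within I = bot then 0 else B t (\<beta>' t)) (B t (Z t))) = 0"
        proof (cases "at t within I = bot")
          case True then show ?thesis by (simp add: am_zero1 md_zeros)
        next
          case False
          then show ?thesis using key[OF t False z[rule_format, OF t]] U B0[OF t] by (simp add: am_zero1)
        qed
      qed
    qed
  qed
  have "intrinsic_rolling a X I \<beta> Y B"
    unfolding intrinsic_rolling_def using bT Ystief LI cond2 cond3 by blast
  then show ?thesis unfolding Y_def B_def .
qed

end
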